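(* Let $\sigma:\mathbb{Z}'\to[0,1]$ with $\sum_{l\in\mathbb{Z}',\,l<0}\sigma(l)<\infty$, and let $s\in\mathbb{Z}'$ be such that $Q^0_\sigma(s):=\prod_{i=1}^{\infty}\bigl(1-\sigma(-i-s)\bigr)>0$. There exists $L_*=L_*(s)>0$ such that the discrete Riemann--Hilbert problem for $Y$ described in the context is solvable for $0\le L\le L_*$, and moreover \[ Y(z;L,s)=Y^{[0]}(z;s)+L Y^{[1]}(z;s)+L^2 Y^{[2]}(z;s)+L^3 Y^{[3]}(z;s)+\mathrm O(L^4),\qquad L\to 0, \] where $Y^{[i]}(z;s)$ are $2\times 2$ matrix-valued meromorphic functions of $z$ independent of $L$.
   Context: $\mathbb{Z}'=\mathbb{Z}+\tfrac12$, $\mathbb{Z}'_+=\mathbb{Z}'\cap(0,\infty)$; $\mathrm{J}_k$ is the Bessel function of the first kind. For $L\ge0$ let $K^{\mathsf{Be}}(a,a)=\sum_{l\in\mathbb{Z}'_+}\mathrm{J}_{a+l}(2L)^2$, $M_s(a,a)=\sigma(a-s-\tfrac12)K^{\mathsf{Be}}(a,a)$, $\mathbf f(a)=\sqrt{\sigma(a-s-\tfrac12)}(\mathrm{J}_{a-\frac12}(2L),L\mathrm{J}_{a+\frac12}(2L))^\top$, $\mathbf g(a)=\sqrt{\sigma(a-s-\tfrac12)}(L\mathrm{J}_{a+\frac12}(2L),-\mathrm{J}_{a-\frac12}(2L))^\top$, $W_Y(a)=\mathbf f(a)\mathbf g(a)^\top/(1-M_s(a,a))$. Discrete RH problem for $Y=Y(z;L,s)$: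 $Y$ is a $2\times2$ matrix-valued meromorphic function of $z$ with simple poles only at $\mathbb{Z}'$; for each $a\in\mathbb{Z}'$, $Y(z)\bigl(I-\frac{W_Y(a)}{z-a}\bigr)$ has a removable singularity at $z=a$; $\sup_{|z|=n}|Y(z)-I|\to0$ as $n\to+\infty$ through integers. *)

theory Defs
  imports "HOL-Complex_Analysis.Complex_Analysis"
begin

(* Half-integers Z' = Z + 1/2, as a set of reals and as a set of complex numbers.
   A half-integer a is written a = m + 1/2 with m :: int. *)
definition halfint :: "real set" where
  "halfint = {x. \<exists>m::int. x = of_int m + 1/2}"

definition halfintC :: "complex set" where
  "halfintC = complex_of_real ` halfint"

definition besselJ_nat :: "nat \<Rightarrow> real \<Rightarrow> real" where
  "besselJ_nat n x = (\<Sum>k. (-1)^k / (fact k * fact (k + n)) * (x/2)^(2*k + n))"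

definition besselJ :: "int \<Rightarrow> real \<Rightarrow> real" where
  "besselJ n x = (if 0 \<le> n then besselJ_nat (nat n) x
                  else (-1)^(nat (-n)) * besselJ_nat (nat (-n)) x)"

(* K^Be(a,a) = sum_{l in Z'_+} J_{a+l}(2L)^2 for a = m + 1/2;
   with l = k + 1/2 (k :: nat) the order a + l equals m + k + 1. *)
definition KBe :: "real \<Rightarrow> int \<Rightarrow> real" where
  "KBe L m = (\<Sum>k. (besselJ (m + int k + 1) (2*L))^2)"

definition Ms :: "(real \<Rightarrow> real) \<Rightarrow> real \<Rightarrow> real \<Rightarrow> int \<Rightarrow> real" where
  "Ms \<sigma> s L m = \<sigma> (of_int m + 1/2 - s - 1/2) * KBe L m"

(* f(a), g(a) for a = m + 1/2; note a - 1/2 = m, a + 1/2 = m + 1 *)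
definition fvec :: "(real \<Rightarrow> real) \<Rightarrow> real \<Rightarrow> real \<Rightarrow> int \<Rightarrow> real^2" where
  "fvec \<sigma> s L m = sqrt (\<sigma> (of_int m + 1/2 - s - 1/2)) *\<^sub>R
      vector [besselJ m (2*L), L * besselJ (m+1) (2*L)]"

definition gvec :: "(real \<Rightarrow> real) \<Rightarrow> real \<Rightarrow> real \<Rightarrow> int \<Rightarrow> real^2" where
  "gvec \<sigma> s L m = sqrt (\<sigma> (of_int m + 1/2 - s - 1/2)) *\<^sub>R
      vector [L * besselJ (m+1) (2*L), - besselJ m (2*L)]"

definition WY :: "(real \<Rightarrow> real) \<Rightarrow> real \<Rightarrow> real \<Rightarrow> int \<Rightarrow> complex^2^2" where
  "WY \<sigma> s L m = (\<chi> i j. complex_of_real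
      (fvec \<sigma> s L m $ i * gvec \<sigma> s L m $ j / (1 - Ms \<sigma> s L m)))"

definition RH_solution :: "(real \<Rightarrow> real) \<Rightarrow> real \<Rightarrow> real \<Rightarrow> (complex \<Rightarrow> complex^2^2) \<Rightarrow> bool" where
  "RH_solution \<sigma> s L Y \<longleftrightarrow>
     \<comment> \<open>meromorphic, holomorphic off Z'\<close>
     (\<forall>i j. (\<lambda>z. Y z $ i $ j) holomorphic_on (- halfintC)) \<and>
     \<comment> \<open>at most simple poles at the points of Z'\<close>
     (\<forall>m::int. \<forall>i j. \<exists>c. ((\<lambda>z. (z - complex_of_real (of_int m + 1/2)) * Y z $ i $ j) \<longlongrightarrow> c)
                         (at (complex_of_real (of_int m + 1/2)))) \<and>
     \<comment> \<open>jump condition: Y(z)(I - W_Y(a)/(z-a)) has a removable singularity at a\<close>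
     (\<forall>m::int. \<exists>R. ((\<lambda>z. Y z ** (mat 1 - (\<chi> i j. WY \<sigma> s L m $ i $ j / (z - complex_of_real (of_int m + 1/2)))))
                      \<longlongrightarrow> R) (at (complex_of_real (of_int m + 1/2)))) \<and>
     \<comment> \<open>normalisation: sup_{|z|=n} |Y(z) - I| -> 0 as n -> +oo through integers\<close>
     (\<forall>\<epsilon>>0. \<exists>N::nat. \<forall>n\<ge>N. \<forall>z. cmod z = real n \<longrightarrow> norm (Y z - mat 1) \<le> \<epsilon>)"

end

theory Submission
  imports Defs
begin


section \<open>Weights on the integers\<close>

lemma int_UNIV_split: "(UNIV::int set) = range int \<union> range (\<lambda>n::nat. - int n - 1)"
proof -
  have "k \<in> range int \<union> range (\<lambda>n::nat. - int n - 1)" for k :: int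
  proof (cases "k \<ge> 0")
    case True then show ?thesis by (metis UnI1 nonneg_int_cases rangeI)
  next
    case False
    then have "k = - int (nat (-k-1)) - 1" by simp
    then show ?thesis by blast
  qed
  then show ?thesis by blast
qed

lemma geom_int_summable:
  fixes q :: real assumes q: "0 \<le> q" "q < 1"
  shows "(\<lambda>k::int. q ^ nat \<bar>k\<bar>) summable_on UNIV"
proof -
  have s1: "(\<lambda>n::nat. q ^ n) summable_on UNIV"
    using q by (subst summable_on_UNIV_nonneg_real_iff) (auto intro: summable_geometric)
  have s2: "(\<lambda>n::nat. q ^ Suc n) summable_on UNIV"
    using q by (subst summable_on_UNIV_nonneg_real_iff) (auto intro!: summable_mult summable_geometric simp: power_Suc)
  have a: "(\<lambda>k::int. q ^ nat \<bar>k\<bar>) summable_on range int"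
    by (subst summable_on_reindex) (auto simp: o_def s1)
  have b: "(\<lambda>k::int. q ^ nat \<bar>k\<bar>) summable_on range (\<lambda>n::nat. - int n - 1)"
  proof (subst summable_on_reindex)
    show "inj_on (\<lambda>n::nat. - int n - 1) UNIV" by (auto simp: inj_on_def)
    have "(\<lambda>n::nat. q ^ nat \<bar>- int n - 1\<bar>) = (\<lambda>n. q ^ Suc n)"
      by (rule ext) (simp add: nat_add_distrib)
    then show "((\<lambda>k::int. q ^ nat \<bar>k\<bar>) \<circ> (\<lambda>n::nat. - int n - 1)) summable_on UNIV"
      using s2 by (simp add: o_def)
  qed
  have "(\<lambda>k::int. q ^ nat \<bar>k\<bar>) summable_on (range int \<union> range (\<lambda>n::nat. - int n - 1))"
    by (rule summable_on_Un_disjoint[OF a b]) auto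
  then show ?thesis using int_UNIV_split by simp
qed

definition om :: "int \<Rightarrow> real" where "om k = (1/2) ^ nat \<bar>k\<bar>"

lemma om_summable: "om summable_on UNIV"
  unfolding om_def by (rule geom_int_summable) auto

lemma om_pos: "0 < om k" by (simp add: om_def)

definition Wom :: real where "Wom = (\<Sum>\<^sub>\<infinity>k. om k)"

lemma om_le_Wom: "om k \<le> Wom"
proof -
  have "sum om {k} \<le> Wom" unfolding Wom_def
    by (rule finite_sum_le_infsum[OF om_summable]) (auto intro: less_imp_le om_pos)
  then show ?thesis by simp
qed

lemma Wom_pos: "0 < Wom" using om_le_Wom[of 0] om_pos[of 0] by linarith

lemma summable_by_om:
  fixes f :: "int \<Rightarrow> real"
  assumes "\<And>k. \<bar>f k\<bar> \<le> B * om k"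
  shows "f summable_on A"
proof -
  have "(\<lambda>k. B * om k) summable_on UNIV" by (intro summable_on_cmult_right om_summable)
  then have "(\<lambda>k. \<bar>f k\<bar>) summable_on UNIV"
    by (rule summable_on_comparison_test) (use assms in auto)
  then have "f summable_on UNIV" using summable_on_iff_abs_summable_on_real by auto
  then show ?thesis by (rule summable_on_subset) auto
qed

lemma infsum_by_om:
  fixes f :: "int \<Rightarrow> real"
  assumes "\<And>k. \<bar>f k\<bar> \<le> B * om k"
  shows "\<bar>\<Sum>\<^sub>\<infinity>k\<in>A. f k\<bar> \<le> B * Wom"
proof -
  have B: "0 \<le> B" using assms[of 0] om_pos[of 0]
    by (smt (verit) mult_nonneg_nonneg zero_le_mult_iff)
  have sa: "(\<lambda>k. \<bar>f k\<bar>) summable_on A" by (rule summable_by_om[of _ B]) (use assms in auto)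
  have sB: "(\<lambda>k. B * om k) summable_on UNIV" by (intro summable_on_cmult_right om_summable)
  have sBA: "(\<lambda>k. B * om k) summable_on A" by (rule summable_on_subset[OF sB]) auto
  have "\<bar>\<Sum>\<^sub>\<infinity>k\<in>A. f k\<bar> \<le> (\<Sum>\<^sub>\<infinity>k\<in>A. \<bar>f k\<bar>)"
    using norm_infsum_bound[of f A] sa by (simp add: summable_on_iff_abs_summable_on_real[symmetric])
  also have "\<dots> \<le> (\<Sum>\<^sub>\<infinity>k\<in>A. B * om k)"
    by (rule infsum_mono[OF sa sBA]) (rule assms)
  also have "\<dots> \<le> (\<Sum>\<^sub>\<infinity>k. B * om k)"
  proof (rule infsum_mono_neutral[OF sBA sB])
    show "\<And>x. x \<in> UNIV - A \<Longrightarrow> 0 \<le> B * om x" using B om_pos[THEN less_imp_le] by simp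
  qed auto
  also have "\<dots> = B * Wom" unfolding Wom_def by (rule infsum_cmult_right) (use om_summable in auto)
  finally show ?thesis .
qed


lemma suminf_abs_bound:
  fixes f g :: "nat \<Rightarrow> real"
  assumes "\<And>k. \<bar>f k\<bar> \<le> g k" "g sums G"
  shows "summable f" "\<bar>suminf f\<bar> \<le> G"
proof -
  have sg: "summable g" using assms(2) sums_summable by blast
  have sa: "summable (\<lambda>k. \<bar>f k\<bar>)"
    by (rule summable_comparison_test[OF _ sg]) (use assms(1) in auto)
  then show "summable f" using summable_rabs_cancel by blast
  have "\<bar>suminf f\<bar> \<le> (\<Sum>k. \<bar>f k\<bar>)" by (rule summable_rabs[OF sa])
  also have "\<dots> \<le> suminf g" by (rule suminf_le[OF assms(1) sa sg])
  also have "\<dots> = G" using assms(2) sums_unique by metis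
  finally show "\<bar>suminf f\<bar> \<le> G" .
qed

definition bterm :: "nat \<Rightarrow> real \<Rightarrow> nat \<Rightarrow> real" where
  "bterm n x k = (-1)^k / (fact k * fact (k + n)) * (x/2)^(2*k + n)"

lemma besselJ_nat_bterm: "besselJ_nat n x = suminf (bterm n x)"
  unfolding besselJ_nat_def bterm_def by simp

lemma bterm_bound: "\<bar>bterm n x k\<bar> \<le> (\<bar>x\<bar>/2)^n * (((x/2)^2)^k /\<^sub>R fact k)"
proof -
  have f1: "(1::real) \<le> fact (k+n)" by simp
  have "\<bar>bterm n x k\<bar> = (\<bar>x\<bar>/2)^(2*k+n) / (fact k * fact (k+n))"
    by (simp add: bterm_def abs_mult power_abs)
  also have "\<dots> \<le> (\<bar>x\<bar>/2)^(2*k+n) / fact k"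
    by (rule divide_left_mono) (use f1 in \<open>auto intro!: mult_pos_pos simp: fact_gt_zero\<close>)
  also have "\<dots> = (\<bar>x\<bar>/2)^n * (((x/2)^2)^k /\<^sub>R fact k)"
  proof -
    have e: "((x/2)^2)^k = (\<bar>x\<bar>/2)^(2*k)"
      by (metis abs_divide abs_numeral power2_abs power_mult)
    show ?thesis unfolding e by (simp add: power_add field_simps)
  qed
  finally show ?thesis .
qed

lemma besselJ_nat_bound: "\<bar>besselJ_nat n x\<bar> \<le> (\<bar>x\<bar>/2)^n * exp ((x/2)^2)"
proof -
  have "(\<lambda>k. (\<bar>x\<bar>/2)^n * (((x/2)^2)^k /\<^sub>R fact k)) sums ((\<bar>x\<bar>/2)^n * exp ((x/2)^2))"
    by (intro sums_mult exp_converges)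
  then show ?thesis unfolding besselJ_nat_bterm
    by (rule suminf_abs_bound(2)[OF bterm_bound])
qed

lemma besselJ_bound:
  assumes "0 \<le> L" shows "\<bar>besselJ n (2*L)\<bar> \<le> L ^ nat \<bar>n\<bar> * exp (L^2)"
  using besselJ_nat_bound[of "nat \<bar>n\<bar>" "2*L"] assms
  by (auto simp: besselJ_def abs_mult)

lemma besselJ_bound3:
  assumes "0 \<le> L" "L \<le> 1" shows "\<bar>besselJ n (2*L)\<bar> \<le> 3 * L ^ nat \<bar>n\<bar>"
proof -
  have "exp (L^2) \<le> exp 1" using assms by (simp add: power_le_one)
  also have "\<dots> \<le> 3" by (rule exp_le)
  finally have e: "exp (L^2) \<le> 3" .
  have "\<bar>besselJ n (2*L)\<bar> \<le> L ^ nat \<bar>n\<bar> * exp (L^2)" by (rule besselJ_bound[OF assms(1)])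
  also have "\<dots> \<le> L ^ nat \<bar>n\<bar> * 3" by (rule mult_left_mono[OF e]) (use assms in simp)
  finally show ?thesis by simp
qed

lemma besselJ_nat_trunc:
  assumes "0 \<le> L" "L \<le> 1"
  shows "\<bar>besselJ_nat n (2*L) - (L^n / fact n - L^(n+2) / fact (n+1))\<bar> \<le> 3 * L^4"
proof -
  have "(\<lambda>k. (\<bar>2*L\<bar>/2)^n * (((2*L/2)^2)^k /\<^sub>R fact k)) sums ((\<bar>2*L\<bar>/2)^n * exp ((2*L/2)^2))"
    by (intro sums_mult exp_converges)
  then have sm: "summable (bterm n (2*L))"
    by (rule suminf_abs_bound(1)[OF bterm_bound])
  have split: "suminf (bterm n (2*L)) = (\<Sum>k. bterm n (2*L) (k+2)) + (\<Sum>k<2. bterm n (2*L) k)"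
    by (rule suminf_split_initial_segment[OF sm])
  have fin: "(\<Sum>k<2. bterm n (2*L) k) = L^n / fact n - L^(n+2) / fact (n+1)"
    by (simp add: bterm_def numeral_2_eq_2 field_simps)
  have tb: "\<bar>bterm n (2*L) (k+2)\<bar> \<le> L^4 * ((L^2)^k /\<^sub>R fact k)" for k
  proof -
    have f1: "fact k \<le> (fact (k+2)::real)" by (rule fact_mono) simp
    have ex: "2*(k+2)+n = 2*k+4+n" by simp
    have "bterm n (2*L) (k+2) = (-1)^(k+2) / (fact (k+2) * fact (k+2+n)) * L^(2*k+4+n)"
      unfolding bterm_def ex by simp
    then have "\<bar>bterm n (2*L) (k+2)\<bar> = \<bar>(-1)^(k+2)\<bar> / (fact (k+2) * fact (k+2+n)) * \<bar>L^(2*k+4+n)\<bar>"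
      by (simp add: abs_mult)
    also have "\<dots> = L^(2*k+4+n) / (fact (k+2) * fact (k+2+n))"
      using assms by (simp add: power_abs)
    finally have "\<bar>bterm n (2*L) (k+2)\<bar> = L^(2*k+4+n) / (fact (k+2) * fact (k+2+n))" .
    also have "\<dots> \<le> L^(2*k+4+n) / fact k"
    proof (rule divide_left_mono)
      have "fact k * 1 \<le> fact (k+2) * (fact (k+2+n)::real)"
        by (rule mult_mono[OF f1 fact_ge_1]) auto
      then show "fact k \<le> fact (k+2) * (fact (k+2+n)::real)" by simp
    qed (use assms in auto)
    also have "\<dots> = L^4 * ((L^2)^k / fact k) * L^n"
    proof -
      have "L^(2*k+4+n) = L^4 * (L^2)^k * L^n"
        by (simp add: power_add power_mult mult_ac power_mult_distrib[symmetric] power_commutes)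
           (metis power_even_eq power_mult)
      then show ?thesis by simp
    qed
    also have "\<dots> \<le> L^4 * ((L^2)^k / fact k) * 1"
      by (rule mult_left_mono) (use assms in \<open>auto simp: power_le_one\<close>)
    finally show ?thesis by (simp add: field_simps)
  qed
  have "(\<lambda>k. L^4 * ((L^2)^k /\<^sub>R fact k)) sums (L^4 * exp (L^2))"
    by (intro sums_mult exp_converges)
  then have "\<bar>\<Sum>k. bterm n (2*L) (k+2)\<bar> \<le> L^4 * exp (L^2)"
    by (rule suminf_abs_bound(2)[OF tb])
  also have "\<dots> \<le> L^4 * 3"
  proof (rule mult_left_mono)
    have "exp (L^2) \<le> exp 1" using assms by (simp add: power_le_one)
    then show "exp (L^2) \<le> 3" using exp_le by linarith
  qed (use assms in simp)
  finally show ?thesis using split fin by (simp add: besselJ_nat_bterm)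
qed


section \<open>Expansions in L at 0\<close>

definition On :: "nat \<Rightarrow> (real \<Rightarrow> real) \<Rightarrow> bool" where
  "On n f \<longleftrightarrow> (\<exists>C. \<forall>\<^sub>F L in at_right 0. \<bar>f L\<bar> \<le> C * L^n)"

definition Pn :: "nat \<Rightarrow> (real \<Rightarrow> real) \<Rightarrow> bool" where
  "Pn n f \<longleftrightarrow> (\<exists>p. On n (\<lambda>L. f L - poly p L))"

lemma ev01: "\<forall>\<^sub>F L in at_right (0::real). 0 < L \<and> L \<le> 1"
  unfolding eventually_at_right_field by (rule exI[of _ 1]) auto

lemma On_add: "On n f \<Longrightarrow> On n g \<Longrightarrow> On n (\<lambda>L. f L + g L)"
  unfolding On_def
proof (elim exE)
  fix C D assume C: "\<forall>\<^sub>F L in at_right 0. \<bar>f L\<bar> \<le> C * L^n" and D: "\<forall>\<^sub>F L in at_right 0. \<bar>g L\<bar> \<le> D * L^n"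
  show "\<exists>C. \<forall>\<^sub>F L in at_right 0. \<bar>f L + g L\<bar> \<le> C * L^n"
    by (rule exI[of _ "C+D"]) (rule eventually_mono[OF eventually_conj[OF C D]], auto simp: algebra_simps)
qed

lemma On_neg: "On n f \<Longrightarrow> On n (\<lambda>L. - f L)"
  unfolding On_def by simp

lemma On_diff: "On n f \<Longrightarrow> On n g \<Longrightarrow> On n (\<lambda>L. f L - g L)"
  using On_add[OF _ On_neg[of n g]] by simp

lemma On_bmult:
  assumes "On n f" "\<forall>\<^sub>F L in at_right 0. \<bar>g L\<bar> \<le> B"
  shows "On n (\<lambda>L. g L * f L)"
proof -
  obtain C where C: "\<forall>\<^sub>F L in at_right 0. \<bar>f L\<bar> \<le> C * L^n" using assms(1) unfolding On_def by blast
  have "\<forall>\<^sub>F L in at_right 0. \<bar>g L * f L\<bar> \<le> (B * C) * L^n"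
    using eventually_conj[OF eventually_conj[OF C assms(2)] ev01]
  proof (rule eventually_mono)
    fix L assume h: "(\<bar>f L\<bar> \<le> C * L ^ n \<and> \<bar>g L\<bar> \<le> B) \<and> 0 < L \<and> L \<le> 1"
    have "\<bar>g L * f L\<bar> = \<bar>g L\<bar> * \<bar>f L\<bar>" by (simp add: abs_mult)
    also have "\<dots> \<le> B * (C * L^n)" using h by (intro mult_mono) auto
    finally show "\<bar>g L * f L\<bar> \<le> (B * C) * L^n" by simp
  qed
  then show ?thesis unfolding On_def by blast
qed

lemma On_cmult: "On n f \<Longrightarrow> On n (\<lambda>L. c * f L)"
  by (rule On_bmult[of _ _ _ "\<bar>c\<bar>"]) auto

lemma On_mono:
  assumes "On n f" "m \<le> n" shows "On m f"
proof -
  obtain C where C: "\<forall>\<^sub>F L in at_right 0. \<bar>f L\<bar> \<le> C * L^n" using assms(1) unfolding On_def by blast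
  have "\<forall>\<^sub>F L in at_right 0. \<bar>f L\<bar> \<le> \<bar>C\<bar> * L^m"
    using eventually_conj[OF C ev01]
  proof (rule eventually_mono)
    fix L assume h: "\<bar>f L\<bar> \<le> C * L ^ n \<and> 0 < L \<and> L \<le> 1"
    have "L^n \<le> L^m" using h assms(2) by (intro power_decreasing) auto
    have "C * L^n \<le> \<bar>C\<bar> * L^n" using h by (intro mult_right_mono) auto
    also have "\<dots> \<le> \<bar>C\<bar> * L^m" using \<open>L^n \<le> L^m\<close> by (intro mult_left_mono) auto
    finally have "C * L^n \<le> \<bar>C\<bar> * L^m" .
    then show "\<bar>f L\<bar> \<le> \<bar>C\<bar> * L^m" using h by linarith
  qed
  then show ?thesis unfolding On_def by blast
qed

lemma On_ev_cong: "On n f \<Longrightarrow> \<forall>\<^sub>F L in at_right 0. f L = g L \<Longrightarrow> On n g"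
  unfolding On_def
proof (elim exE)
  fix C assume "\<forall>\<^sub>F L in at_right 0. \<bar>f L\<bar> \<le> C * L^n" "\<forall>\<^sub>F L in at_right 0. f L = g L"
  then have "\<forall>\<^sub>F L in at_right 0. \<bar>g L\<bar> \<le> C * L^n"
    by eventually_elim auto
  then show "\<exists>C. \<forall>\<^sub>F L in at_right 0. \<bar>g L\<bar> \<le> C * L^n" by blast
qed

lemma On_0_iff: "On 0 f \<longleftrightarrow> (\<exists>B. \<forall>\<^sub>F L in at_right 0. \<bar>f L\<bar> \<le> B)"
  unfolding On_def by simp

lemma On_bound: "\<forall>\<^sub>F L in at_right 0. \<bar>f L\<bar> \<le> C * L^n \<Longrightarrow> On n f"
  unfolding On_def by blast

lemma poly_bounded_near0: "\<exists>B. \<forall>\<^sub>F L in at_right (0::real). \<bar>poly p L\<bar> \<le> B"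
proof -
  have "((\<lambda>L. poly p L) \<longlongrightarrow> poly p 0) (at_right (0::real))"
    by (intro tendsto_intros)
  then have "\<forall>\<^sub>F L in at_right (0::real). dist (poly p L) (poly p 0) < 1"
    by (rule tendstoD) simp
  then have "\<forall>\<^sub>F L in at_right (0::real). \<bar>poly p L\<bar> \<le> \<bar>poly p 0\<bar> + 1"
    by (rule eventually_mono) (auto simp: dist_real_def)
  then show ?thesis by blast
qed

lemma Pn_bounded: "Pn n f \<Longrightarrow> \<exists>B. \<forall>\<^sub>F L in at_right 0. \<bar>f L\<bar> \<le> B"
proof -
  assume "Pn n f"
  then obtain p where "On n (\<lambda>L. f L - poly p L)" unfolding Pn_def by blast
  then have "On 0 (\<lambda>L. f L - poly p L)" by (rule On_mono) simp
  then obtain B1 where B1: "\<forall>\<^sub>F L in at_right 0. \<bar>f L - poly p L\<bar> \<le> B1" unfolding On_0_iff by blast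
  obtain B2 where B2: "\<forall>\<^sub>F L in at_right (0::real). \<bar>poly p L\<bar> \<le> B2" using poly_bounded_near0 by blast
  have "\<forall>\<^sub>F L in at_right 0. \<bar>f L\<bar> \<le> B1 + B2"
    by (rule eventually_mono[OF eventually_conj[OF B1 B2]]) auto
  then show ?thesis by blast
qed

lemma Pn_add: "Pn n f \<Longrightarrow> Pn n g \<Longrightarrow> Pn n (\<lambda>L. f L + g L)"
  unfolding Pn_def
proof (elim exE)
  fix p q assume "On n (\<lambda>L. f L - poly p L)" "On n (\<lambda>L. g L - poly q L)"
  then have "On n (\<lambda>L. (f L - poly p L) + (g L - poly q L))" by (rule On_add)
  moreover have "(\<lambda>L. (f L - poly p L) + (g L - poly q L)) = (\<lambda>L. f L + g L - poly (p + q) L)"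
    by (rule ext) (simp add: algebra_simps)
  ultimately have "On n (\<lambda>L. f L + g L - poly (p + q) L)" by simp
  then show "\<exists>p. On n (\<lambda>L. f L + g L - poly p L)" by blast
qed

lemma Pn_cmult: "Pn n f \<Longrightarrow> Pn n (\<lambda>L. c * f L)"
  unfolding Pn_def
proof (elim exE)
  fix p assume "On n (\<lambda>L. f L - poly p L)"
  then have "On n (\<lambda>L. c * (f L - poly p L))" by (rule On_cmult)
  then have "On n (\<lambda>L. c * f L - poly (smult c p) L)"
    by (simp add: right_diff_distrib)
  then show "\<exists>p. On n (\<lambda>L. c * f L - poly p L)" by blast
qed

lemma Pn_neg: "Pn n f \<Longrightarrow> Pn n (\<lambda>L. - f L)"
  using Pn_cmult[of n f "-1"] by simp

lemma Pn_diff: "Pn n f \<Longrightarrow> Pn n g \<Longrightarrow> Pn n (\<lambda>L. f L - g L)"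
  using Pn_add[OF _ Pn_neg[of n g]] by simp

lemma Pn_poly: "Pn n (\<lambda>L. poly p L)"
  unfolding Pn_def On_def by (rule exI[of _ p], rule exI[of _ 0]) simp

lemma Pn_const: "Pn n (\<lambda>L. c)"
  using Pn_poly[of n "[:c:]"] by simp

lemma Pn_monom: "Pn n (\<lambda>L. c * L^k)"
  using Pn_poly[of n "monom c k"] by (simp add: poly_monom)

lemma Pn_mult:
  assumes "Pn n f" "Pn n g" shows "Pn n (\<lambda>L. f L * g L)"
proof -
  obtain p where p: "On n (\<lambda>L. f L - poly p L)" using assms(1) unfolding Pn_def by blast
  obtain q where q: "On n (\<lambda>L. g L - poly q L)" using assms(2) unfolding Pn_def by blast
  obtain B where B: "\<forall>\<^sub>F L in at_right 0. \<bar>g L\<bar> \<le> B" using Pn_bounded[OF assms(2)] by blast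
  obtain B' where B': "\<forall>\<^sub>F L in at_right (0::real). \<bar>poly p L\<bar> \<le> B'" using poly_bounded_near0 by blast
  have "On n (\<lambda>L. g L * (f L - poly p L) + poly p L * (g L - poly q L))"
    by (intro On_add On_bmult[OF p B] On_bmult[OF q B'])
  then have "On n (\<lambda>L. f L * g L - poly (p * q) L)"
    by (simp add: algebra_simps)
  then show ?thesis unfolding Pn_def by blast
qed

lemma Pn_sum: "finite A \<Longrightarrow> (\<And>i. i \<in> A \<Longrightarrow> Pn n (f i)) \<Longrightarrow> Pn n (\<lambda>L. \<Sum>i\<in>A. f i L)"
proof (induction A rule: finite_induct)
  case empty then show ?case using Pn_const[of n 0] by simp
next
  case (insert x F)
  then show ?case using Pn_add[of n "f x" "\<lambda>L. \<Sum>i\<in>F. f i L"] by simp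
qed

lemma Pn_mono: "Pn n f \<Longrightarrow> m \<le> n \<Longrightarrow> Pn m f"
  unfolding Pn_def using On_mono by blast

lemma Pn_err: "On n (\<lambda>L. f L - g L) \<Longrightarrow> Pn n g \<Longrightarrow> Pn n f"
  unfolding Pn_def
proof (elim exE)
  fix p assume "On n (\<lambda>L. f L - g L)" "On n (\<lambda>L. g L - poly p L)"
  then have "On n (\<lambda>L. (f L - g L) + (g L - poly p L))" by (rule On_add)
  then have "On n (\<lambda>L. f L - poly p L)" by simp
  then show "\<exists>p. On n (\<lambda>L. f L - poly p L)" by blast
qed

lemma Pn_ev_cong: "Pn n f \<Longrightarrow> \<forall>\<^sub>F L in at_right 0. f L = g L \<Longrightarrow> Pn n g"
  unfolding Pn_def
proof (elim exE)
  fix p assume "On n (\<lambda>L. f L - poly p L)" "\<forall>\<^sub>F L in at_right 0. f L = g L"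
  then have "On n (\<lambda>L. g L - poly p L)"
    by (elim On_ev_cong) (auto elim: eventually_mono)
  then show "\<exists>p. On n (\<lambda>L. g L - poly p L)" by blast
qed

lemma Pn_Lmult:
  assumes "Pn n f" shows "Pn (Suc n) (\<lambda>L. L * f L)"
proof -
  obtain p C where C: "\<forall>\<^sub>F L in at_right 0. \<bar>f L - poly p L\<bar> \<le> C * L^n"
    using assms unfolding Pn_def On_def by blast
  have "\<forall>\<^sub>F L in at_right 0. \<bar>L * f L - poly (pCons 0 p) L\<bar> \<le> C * L^(Suc n)"
    using eventually_conj[OF C ev01]
  proof (rule eventually_mono)
    fix L assume h: "\<bar>f L - poly p L\<bar> \<le> C * L ^ n \<and> 0 < L \<and> L \<le> 1"
    have "\<bar>L * f L - poly (pCons 0 p) L\<bar> = L * \<bar>f L - poly p L\<bar>"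
      using h by (simp add: abs_mult right_diff_distrib[symmetric])
    also have "\<dots> \<le> L * (C * L^n)" using h by (intro mult_left_mono) auto
    finally show "\<bar>L * f L - poly (pCons 0 p) L\<bar> \<le> C * L^(Suc n)" by (simp add: algebra_simps)
  qed
  then show ?thesis unfolding Pn_def On_def by blast
qed

lemma Pn_On: "On n f \<Longrightarrow> Pn n f"
  unfolding Pn_def by (rule exI[of _ 0]) simp

lemma Pn_0_iff: "Pn 0 f \<longleftrightarrow> (\<exists>B. \<forall>\<^sub>F L in at_right 0. \<bar>f L\<bar> \<le> B)"
proof
  assume "Pn 0 f" then show "\<exists>B. \<forall>\<^sub>F L in at_right 0. \<bar>f L\<bar> \<le> B" by (rule Pn_bounded)
next
  assume "\<exists>B. \<forall>\<^sub>F L in at_right 0. \<bar>f L\<bar> \<le> B"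
  then have "On 0 f" unfolding On_0_iff .
  then show "Pn 0 f" by (rule Pn_On)
qed


lemma at_right0_nonbot: "at_right (0::real) \<noteq> bot"
  using trivial_limit_at_right_real[of 0] by blast

lemma inv_identity:
  fixes a x y z :: real
  assumes "x \<noteq> 0" "a \<noteq> 0" "z = a + L * y"
  shows "1/a + (-1/a) * (L * (y * (1 / x))) + (-1/a) * ((1 / x) * (x - z)) = 1 / x"
proof -
  have "1/a + (-1/a) * (L * (y * (1 / x))) + (-1/a) * ((1 / x) * (x - z)) = (1 - (L*y + x - z) / x) / a"
    by (simp add: algebra_simps add_divide_distrib diff_divide_distrib)
  also have "L*y + x - z = x - a" using assms(3) by simp
  also have "(1 - (x - a) / x) / a = 1 / x" using assms(1,2) by (simp add: field_simps)
  finally show ?thesis .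
qed

lemma Pn_inverse:
  assumes "Pn n f" "0 < d" "\<forall>\<^sub>F L in at_right 0. d \<le> \<bar>f L\<bar>"
  shows "Pn n (\<lambda>L. 1 / f L)"
proof -
  have bnd: "\<forall>\<^sub>F L in at_right 0. \<bar>1 / f L\<bar> \<le> 1/d"
    using assms(3)
  proof (rule eventually_mono)
    fix L assume "d \<le> \<bar>f L\<bar>"
    then show "\<bar>1 / f L\<bar> \<le> 1/d" using assms(2) by (simp add: abs_div_pos frac_le)
  qed
  have P0: "Pn 0 (\<lambda>L. 1 / f L)" unfolding Pn_0_iff using bnd by blast
  show ?thesis
  proof (cases "n = 0")
    case True then show ?thesis using P0 by simp
  next
    case False
    obtain p C where pC: "\<forall>\<^sub>F L in at_right 0. \<bar>f L - poly p L\<bar> \<le> C * L^n"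
      using assms(1) unfolding Pn_def On_def by blast
    have pOn: "On n (\<lambda>L. f L - poly p L)" unfolding On_def using pC by blast
    obtain a r where ar: "p = pCons a r" by (cases p) auto
    have pp: "poly p L = a + L * poly r L" for L using ar by simp
    obtain B where B: "\<forall>\<^sub>F L in at_right (0::real). \<bar>poly r L\<bar> \<le> B" using poly_bounded_near0 by blast
    have a0: "a \<noteq> 0"
    proof
      assume a: "a = 0"
      have "((\<lambda>L. (\<bar>C\<bar> + \<bar>B\<bar>) * L) \<longlongrightarrow> (\<bar>C\<bar> + \<bar>B\<bar>) * 0) (at_right (0::real))"
        by (intro tendsto_intros)
      then have "\<forall>\<^sub>F L in at_right (0::real). dist ((\<bar>C\<bar> + \<bar>B\<bar>) * L) 0 < d"
        using assms(2) by (simp add: tendsto_iff)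
      then have "\<forall>\<^sub>F L in at_right (0::real). False"
        using eventually_conj[OF eventually_conj[OF pC B] eventually_conj[OF assms(3) ev01]]
      proof eventually_elim
        case (elim L)
        then have h: "\<bar>f L - poly p L\<bar> \<le> C * L ^ n" "\<bar>poly r L\<bar> \<le> B" "d \<le> \<bar>f L\<bar>" "0 < L" "L \<le> 1"
          "\<bar>(\<bar>C\<bar> + \<bar>B\<bar>) * L\<bar> < d" by (auto simp: dist_real_def)
        have "L^n \<le> L^1" using h False by (intro power_decreasing) auto
        have "C * L^n \<le> \<bar>C\<bar> * L^n" using h by (intro mult_right_mono) auto
        also have "\<dots> \<le> \<bar>C\<bar> * L" using \<open>L^n \<le> L^1\<close> by (intro mult_left_mono) auto
        finally have "C * L^n \<le> \<bar>C\<bar> * L" .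
        moreover have "\<bar>L * poly r L\<bar> \<le> \<bar>B\<bar> * L"
          using h by (simp add: abs_mult mult_left_mono mult.commute[of L])
        moreover have "\<bar>f L\<bar> \<le> \<bar>f L - poly p L\<bar> + \<bar>L * poly r L\<bar>" using pp a by simp
        moreover have "(\<bar>C\<bar> + \<bar>B\<bar>) * L < d" using h(6) abs_ge_self[of "(\<bar>C\<bar> + \<bar>B\<bar>) * L"] by linarith
        moreover have "(\<bar>C\<bar> + \<bar>B\<bar>) * L = \<bar>C\<bar> * L + \<bar>B\<bar> * L" by (simp add: distrib_right)
        ultimately show False using h by linarith
      qed
      then show False using at_right0_nonbot by (simp add: eventually_False)
    qed
    have "Pn j (\<lambda>L. 1 / f L)" if "j \<le> n" for j
      using that
    proof (induction j)
      case 0 show ?case using P0 by simp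
    next
      case (Suc j)
      then have IH: "Pn j (\<lambda>L. 1 / f L)" by simp
      have t2: "Pn (Suc j) (\<lambda>L. (-1/a) * (L * (poly r L * (1 / f L))))"
        by (intro Pn_cmult Pn_Lmult Pn_mult Pn_poly IH)
      have "On (Suc j) (\<lambda>L. f L - poly p L)" by (rule On_mono[OF pOn]) (use Suc in simp)
      then have "On (Suc j) (\<lambda>L. (1 / f L) * (f L - poly p L))" by (rule On_bmult[OF _ bnd])
      then have t3: "Pn (Suc j) (\<lambda>L. (-1/a) * ((1 / f L) * (f L - poly p L)))"
        by (intro Pn_cmult Pn_On)
      have "Pn (Suc j) (\<lambda>L. 1/a + (-1/a) * (L * (poly r L * (1 / f L))) + (-1/a) * ((1 / f L) * (f L - poly p L)))"
        by (intro Pn_add Pn_const t2 t3)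
      moreover have "\<forall>\<^sub>F L in at_right 0. 1/a + (-1/a) * (L * (poly r L * (1 / f L))) + (-1/a) * ((1 / f L) * (f L - poly p L)) = 1 / f L"
        using assms(3)
      proof (rule eventually_mono)
        fix L assume "d \<le> \<bar>f L\<bar>"
        then have fL: "f L \<noteq> 0" using assms(2) by auto
        show "1/a + (-1/a) * (L * (poly r L * (1 / f L))) + (-1/a) * ((1 / f L) * (f L - poly p L)) = 1 / f L"
          using inv_identity[OF fL a0 pp] .
      qed
      ultimately show ?case by (rule Pn_ev_cong)
    qed
    then show ?thesis by simp
  qed
qed

lemma poly_trunc4: "On 4 (\<lambda>L. poly p L - (\<Sum>d<4. coeff p d * L^d))"
proof -
  define N where "N = max 4 (Suc (degree p))"
  have N4: "4 \<le> N" unfolding N_def by simp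
  have pN: "poly p L = (\<Sum>d<N. coeff p d * L^d)" for L
  proof -
    have "poly p L = (\<Sum>d\<le>degree p. coeff p d * L^d)" by (rule poly_altdef)
    also have "\<dots> = (\<Sum>d<N. coeff p d * L^d)"
      by (rule sum.mono_neutral_left) (auto simp: N_def coeff_eq_0)
    finally show ?thesis .
  qed
  have spl: "(\<Sum>d<N. coeff p d * L^d) = (\<Sum>d<4. coeff p d * L^d) + (\<Sum>d\<in>{4..<N}. coeff p d * L^d)" for L
  proof -
    have e: "{..<N} = {..<4} \<union> {4..<N}" using N4 by auto
    show ?thesis unfolding e by (subst sum.union_disjoint) auto
  qed
  have "\<forall>\<^sub>F L in at_right 0. \<bar>poly p L - (\<Sum>d<4. coeff p d * L^d)\<bar> \<le> (\<Sum>d\<in>{4..<N}. \<bar>coeff p d\<bar>) * L^4"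
    using ev01
  proof (rule eventually_mono)
    fix L :: real assume h: "0 < L \<and> L \<le> 1"
    have "\<bar>poly p L - (\<Sum>d<4. coeff p d * L^d)\<bar> = \<bar>\<Sum>d\<in>{4..<N}. coeff p d * L^d\<bar>"
      using pN spl by simp
    also have "\<dots> \<le> (\<Sum>d\<in>{4..<N}. \<bar>coeff p d * L^d\<bar>)" by (rule sum_abs)
    also have "\<dots> \<le> (\<Sum>d\<in>{4..<N}. \<bar>coeff p d\<bar> * L^4)"
    proof (rule sum_mono)
      fix d assume "d \<in> {4..<N}"
      then have "L^d \<le> L^4" using h by (intro power_decreasing) auto
      then show "\<bar>coeff p d * L^d\<bar> \<le> \<bar>coeff p d\<bar> * L^4"
        using h by (simp add: abs_mult mult_left_mono)
    qed
    also have "\<dots> = (\<Sum>d\<in>{4..<N}. \<bar>coeff p d\<bar>) * L^4" by (simp add: sum_distrib_right)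
    finally show "\<bar>poly p L - (\<Sum>d<4. coeff p d * L^d)\<bar> \<le> (\<Sum>d\<in>{4..<N}. \<bar>coeff p d\<bar>) * L^4" .
  qed
  then show ?thesis unfolding On_def by blast
qed

lemma Pn_besselJ: "Pn 4 (\<lambda>L. besselJ n (2*L))"
proof -
  have nat: "Pn 4 (\<lambda>L. besselJ_nat m (2*L))" for m
  proof (rule Pn_err)
    have "\<forall>\<^sub>F L in at_right 0. \<bar>besselJ_nat m (2*L) - (L^m / fact m - L^(m+2) / fact (m+1))\<bar> \<le> 3 * L^4"
      using ev01 by (rule eventually_mono) (intro besselJ_nat_trunc, auto)
    then show "On 4 (\<lambda>L. besselJ_nat m (2*L) - (L^m / fact m - L^(m+2) / fact (m+1)))"
      unfolding On_def by blast
    have a: "Pn 4 (\<lambda>L. (1 / fact m) * L^m)" by (rule Pn_monom)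
    have b: "Pn 4 (\<lambda>L. (1 / fact (m+1)) * L^(m+2))" by (rule Pn_monom)
    show "Pn 4 (\<lambda>L. L^m / fact m - L^(m+2) / fact (m+1))"
      using Pn_diff[OF a b] by simp
  qed
  show ?thesis
  proof (cases "0 \<le> n")
    case True then show ?thesis using nat[of "nat n"] by (simp add: besselJ_def)
  next
    case False
    then show ?thesis using Pn_cmult[OF nat[of "nat (-n)"], of "(-1)^nat (-n)"] by (simp add: besselJ_def)
  qed
qed


section \<open>Sums of simple fractions over half-integers\<close>

definition ah :: "int \<Rightarrow> complex" where "ah k = complex_of_real (of_int k + 1/2)"

definition Fs :: "(int \<Rightarrow> complex) \<Rightarrow> int set \<Rightarrow> complex \<Rightarrow> complex" where
  "Fs r I z = (\<Sum>\<^sub>\<infinity>k\<in>I. r k / (z - ah k))"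

lemma halfintC_iff: "z \<in> halfintC \<longleftrightarrow> (\<exists>k. z = ah k)"
  unfolding halfintC_def halfint_def ah_def by blast

lemma ah_diff: "ah m - ah k = of_int (m - k)"
  unfolding ah_def by simp

lemma norm_ah_diff: "cmod (ah m - ah k) = \<bar>of_int (m - k)\<bar>"
  unfolding ah_diff by (metis norm_of_int)

lemma ah_dist_ge1: "m \<noteq> k \<Longrightarrow> 1 \<le> cmod (ah m - ah k)"
  unfolding norm_ah_diff by linarith

lemma closed_halfintC: "closed halfintC"
proof (rule discrete_imp_closed[of 1])
  show "\<forall>x\<in>halfintC. \<forall>y\<in>halfintC. dist y x < 1 \<longrightarrow> y = x"
  proof (intro ballI impI)
    fix x y assume "x \<in> halfintC" "y \<in> halfintC" "dist y x < 1"
    then obtain m k where "x = ah m" "y = ah k" and d: "cmod (ah k - ah m) < 1"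
      by (auto simp: halfintC_iff dist_norm)
    then show "y = x" using ah_dist_ge1[of k m] d by fastforce
  qed
qed simp

lemma sep_ball:
  assumes "z0 \<notin> halfintC"
  obtains e where "0 < e" "\<And>z k. z \<in> ball z0 e \<Longrightarrow> e \<le> cmod (z - ah k)"
proof -
  have "open (- halfintC)" using closed_halfintC by (simp add: closed_def)
  then obtain e2 where e2: "0 < e2" "ball z0 e2 \<subseteq> - halfintC"
    using assms open_contains_ball by blast
  define e where "e = e2/2"
  have "e \<le> cmod (z - ah k)" if "z \<in> ball z0 e" for z k
  proof -
    have "ah k \<notin> ball z0 e2" using e2(2) halfintC_iff by blast
    then have "e2 \<le> cmod (z0 - ah k)" by (simp add: dist_norm)
    moreover have "cmod (z0 - z) < e" using that by (simp add: dist_norm)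
    moreover have "cmod (z0 - ah k) \<le> cmod (z0 - z) + cmod (z - ah k)"
      using norm_triangle_ineq[of "z0 - z" "z - ah k"] by simp
    ultimately show ?thesis unfolding e_def by linarith
  qed
  moreover have "0 < e" using e2 unfolding e_def by simp
  ultimately show ?thesis using that by blast
qed

lemma sep_point:
  assumes "z0 \<notin> halfintC"
  obtains e where "0 < e" "\<And>k. e \<le> cmod (z0 - ah k)"
  using sep_ball[OF assms] by (metis centre_in_ball)

context
  fixes r :: "int \<Rightarrow> complex"
  assumes rs: "(\<lambda>k. norm (r k)) summable_on UNIV"
begin

lemma rs_on: "(\<lambda>k. norm (r k)) summable_on I"
  by (rule summable_on_subset[OF rs]) auto

lemma Fs_summable:
  assumes "0 < e" "\<And>k. k \<in> I \<Longrightarrow> e \<le> cmod (z - ah k)"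
  shows "(\<lambda>k. r k / (z - ah k)) summable_on I"
proof -
  have "(\<lambda>k. norm (r k) / e) summable_on I"
    using summable_on_cmult_left[OF rs_on, of "1/e" I] by simp
  then have "(\<lambda>k. norm (r k / (z - ah k))) summable_on I"
  proof (rule summable_on_comparison_test)
    fix k assume k: "k \<in> I"
    have "norm (r k / (z - ah k)) = norm (r k) / cmod (z - ah k)" by (simp add: norm_divide)
    also have "\<dots> \<le> norm (r k) / e" using assms k
      by (intro divide_left_mono) (auto intro!: mult_pos_pos dest: order.strict_trans2[of 0 e])
    finally show "norm (r k / (z - ah k)) \<le> norm (r k) / e" by simp
  qed simp
  then show ?thesis using summable_on_iff_abs_summable_on_complex[of "(\<lambda>k. r k / (z - ah k))" I] by simp
qed

lemma Fs_tail_bound: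
  assumes "0 < e" "\<And>k. k \<in> I \<Longrightarrow> e \<le> cmod (z - ah k)"
  shows "cmod (Fs r I z) \<le> (\<Sum>\<^sub>\<infinity>k\<in>I. norm (r k)) / e"
proof -
  have sI: "(\<lambda>k. r k / (z - ah k)) summable_on I" by (rule Fs_summable[OF assms])
  then have aI: "(\<lambda>k. norm (r k / (z - ah k))) summable_on I"
    using summable_on_iff_abs_summable_on_complex[of "(\<lambda>k. r k / (z - ah k))" I] by simp
  have "cmod (Fs r I z) \<le> (\<Sum>\<^sub>\<infinity>k\<in>I. norm (r k / (z - ah k)))"
    unfolding Fs_def by (rule norm_infsum_bound[OF aI])
  also have "\<dots> \<le> (\<Sum>\<^sub>\<infinity>k\<in>I. norm (r k) / e)"
  proof (rule infsum_mono[OF aI])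
    show "(\<lambda>k. norm (r k) / e) summable_on I"
    using summable_on_cmult_left[OF rs_on, of "1/e" I] by simp
    fix k assume k: "k \<in> I"
    have "norm (r k / (z - ah k)) = norm (r k) / cmod (z - ah k)" by (simp add: norm_divide)
    also have "\<dots> \<le> norm (r k) / e" using assms k
      by (intro divide_left_mono) (auto intro!: mult_pos_pos dest: order.strict_trans2[of 0 e])
    finally show "norm (r k / (z - ah k)) \<le> norm (r k) / e" .
  qed
  also have "\<dots> = (\<Sum>\<^sub>\<infinity>k\<in>I. norm (r k) * (1/e))" by simp
  also have "\<dots> = (\<Sum>\<^sub>\<infinity>k\<in>I. norm (r k)) * (1/e)" by (rule infsum_cmult_left) (use rs_on in auto)
  finally show ?thesis by simp
qed

lemma tail_small:
  assumes "0 < d"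
  shows "\<forall>\<^sub>F X in finite_subsets_at_top I. (\<Sum>\<^sub>\<infinity>k\<in>I - X. norm (r k)) < d"
proof -
  have hs: "((\<lambda>k. norm (r k)) has_sum (\<Sum>\<^sub>\<infinity>k\<in>I. norm (r k))) I" using rs_on by (rule has_sum_infsum)
  then have "((\<lambda>X. \<Sum>k\<in>X. norm (r k)) \<longlongrightarrow> (\<Sum>\<^sub>\<infinity>k\<in>I. norm (r k))) (finite_subsets_at_top I)"
    unfolding has_sum_def .
  then have ev: "\<forall>\<^sub>F X in finite_subsets_at_top I. dist (\<Sum>k\<in>X. norm (r k)) (\<Sum>\<^sub>\<infinity>k\<in>I. norm (r k)) < d"
    using assms by (rule tendstoD)
  have ev2: "\<forall>\<^sub>F X in finite_subsets_at_top I. finite X \<and> X \<subseteq> I"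
    by (simp add: eventually_finite_subsets_at_top_weakI)
  show ?thesis using eventually_conj[OF ev ev2]
  proof (rule eventually_mono)
    fix X assume h: "dist (\<Sum>k\<in>X. norm (r k)) (\<Sum>\<^sub>\<infinity>k\<in>I. norm (r k)) < d \<and> finite X \<and> X \<subseteq> I"
    have "(\<Sum>\<^sub>\<infinity>k\<in>I - X. norm (r k)) = (\<Sum>\<^sub>\<infinity>k\<in>I. norm (r k)) - (\<Sum>\<^sub>\<infinity>k\<in>X. norm (r k))"
      by (rule infsum_Diff) (use h rs_on in auto)
    also have "\<dots> = (\<Sum>\<^sub>\<infinity>k\<in>I. norm (r k)) - (\<Sum>k\<in>X. norm (r k))" using h by simp
    moreover have "\<bar>(\<Sum>k\<in>X. norm (r k)) - (\<Sum>\<^sub>\<infinity>k\<in>I. norm (r k))\<bar> < d" using h by (simp add: dist_real_def)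
    ultimately show "(\<Sum>\<^sub>\<infinity>k\<in>I - X. norm (r k)) < d" by linarith
  qed
qed

lemma Fs_diff_finite:
  assumes "0 < e" "\<And>k. k \<in> I \<Longrightarrow> e \<le> cmod (z - ah k)" "finite X" "X \<subseteq> I"
  shows "Fs r I z - (\<Sum>k\<in>X. r k / (z - ah k)) = Fs r (I - X) z"
proof -
  have sI: "(\<lambda>k. r k / (z - ah k)) summable_on I" by (rule Fs_summable[OF assms(1,2)])
  have "Fs r (I - X) z = Fs r I z - (\<Sum>\<^sub>\<infinity>k\<in>X. r k / (z - ah k))"
    unfolding Fs_def by (rule infsum_Diff[OF sI]) (use assms in auto)
  then show ?thesis using assms(3) by simp
qed

lemma Fs_holo:
  assumes S: "open S" and e: "0 < e" and sep: "\<And>z k. z \<in> S \<Longrightarrow> k \<in> I \<Longrightarrow> e \<le> cmod (z - ah k)"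
  shows "Fs r I holomorphic_on S"
proof -
  have "\<exists>f'. (Fs r I has_field_derivative f') (at z0)" if z0: "z0 \<in> S" for z0
  proof -
    obtain \<rho> where \<rho>: "0 < \<rho>" "cball z0 \<rho> \<subseteq> S" using S z0 open_contains_cball by blast
    define f where "f X z = (\<Sum>k\<in>X. r k / (z - ah k))" for X z
    have "continuous_on (cball z0 \<rho>) (Fs r I) \<and> Fs r I holomorphic_on ball z0 \<rho>"
    proof (rule holomorphic_uniform_limit[where F="finite_subsets_at_top I" and g="Fs r I" and f="\<lambda>X. f X"])
      have "\<forall>\<^sub>F X in finite_subsets_at_top I. finite X \<and> X \<subseteq> I"
        by (simp add: eventually_finite_subsets_at_top_weakI)
      then show "\<forall>\<^sub>F X in finite_subsets_at_top I. continuous_on (cball z0 \<rho>) (f X) \<and> f X holomorphic_on ball z0 \<rho>"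
      proof (rule eventually_mono)
        fix X assume X: "finite X \<and> X \<subseteq> I"
        have nz: "z - ah k \<noteq> 0" if "z \<in> cball z0 \<rho>" "k \<in> X" for z k
        proof -
          have zS: "z \<in> S" using that(1) \<rho>(2) by auto
          have "e \<le> cmod (z - ah k)" using sep[OF zS] that(2) X by auto
          then show ?thesis using e by auto
        qed
        have "f X holomorphic_on cball z0 \<rho>"
          unfolding f_def by (intro holomorphic_intros) (use nz in auto)
        then show "continuous_on (cball z0 \<rho>) (f X) \<and> f X holomorphic_on ball z0 \<rho>"
          using holomorphic_on_imp_continuous_on holomorphic_on_subset ball_subset_cball by blast
      qed
      show "uniform_limit (cball z0 \<rho>) (\<lambda>X. f X) (Fs r I) (finite_subsets_at_top I)"
      proof (rule uniform_limitI)
        fix d :: real assume d: "0 < d"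
        have "\<forall>\<^sub>F X in finite_subsets_at_top I. (\<Sum>\<^sub>\<infinity>k\<in>I - X. norm (r k)) < d * e"
          using d e by (intro tail_small) simp
        moreover have "\<forall>\<^sub>F X in finite_subsets_at_top I. finite X \<and> X \<subseteq> I"
          by (simp add: eventually_finite_subsets_at_top_weakI)
        ultimately show "\<forall>\<^sub>F X in finite_subsets_at_top I. \<forall>z\<in>cball z0 \<rho>. dist (f X z) (Fs r I z) < d"
        proof eventually_elim
          case (elim X)
          show ?case
          proof
            fix z assume z: "z \<in> cball z0 \<rho>"
            then have zS: "z \<in> S" using \<rho> by auto
            have "dist (f X z) (Fs r I z) = cmod (Fs r I z - f X z)" by (simp add: dist_norm norm_minus_commute)
            also have "Fs r I z - f X z = Fs r (I - X) z"
              unfolding f_def by (rule Fs_diff_finite[OF e]) (use sep zS elim in auto)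
            also have "cmod (Fs r (I - X) z) \<le> (\<Sum>\<^sub>\<infinity>k\<in>I - X. norm (r k)) / e"
              by (rule Fs_tail_bound[OF e]) (use sep zS in auto)
            also have "\<dots> < d" using elim e by (simp add: divide_less_eq)
            finally show "dist (f X z) (Fs r I z) < d" .
          qed
        qed
      qed
    qed auto
    then have "Fs r I field_differentiable (at z0)"
      using holomorphic_on_imp_differentiable_at[of "Fs r I" "ball z0 \<rho>" z0] \<rho> by auto
    then show ?thesis by (auto simp: field_differentiable_def)
  qed
  then show ?thesis using S by (simp add: holomorphic_on_open)
qed

end


lemma halfint_gap:
  fixes n :: nat and k :: int
  shows "1/2 \<le> \<bar>real n - \<bar>of_int k + 1/2\<bar>\<bar>"
proof -
  have g: "1/2 \<le> \<bar>of_int j + 1/2::real\<bar>" for j :: int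
  proof (cases "0 \<le> j")
    case True then have "(0::real) \<le> of_int j" by simp
    then show ?thesis by linarith
  next
    case False then have "of_int j \<le> (-1::real)" by simp
    then show ?thesis by linarith
  qed
  show ?thesis
  proof (cases "0 \<le> k")
    case True
    then have "\<bar>of_int k + 1/2\<bar> = of_int k + (1/2::real)" by simp
    moreover have "real n - (of_int k + 1/2) = -(of_int (k - int n) + 1/2)" by simp
    ultimately show ?thesis using g[of "k - int n"] by (simp only: abs_minus_cancel)
  next
    case False
    then have "\<bar>of_int k + 1/2\<bar> = - (of_int k + (1/2::real))" by simp
    then have e2: "real n - \<bar>of_int k + 1/2\<bar> = of_int (k + int n) + (1/2::real)" by simp
    show ?thesis unfolding e2 by (rule g)
  qed
qed

lemma norm_ah: "cmod (ah k) = \<bar>of_int k + 1/2\<bar>"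
  unfolding ah_def by (simp only: norm_of_real)

lemma circle_sep:
  assumes "cmod z = real n"
  shows "1/2 \<le> cmod (z - ah k)" "real n - \<bar>of_int k\<bar> - 1/2 \<le> cmod (z - ah k)"
proof -
  have t1: "cmod z - cmod (ah k) \<le> cmod (z - ah k)" using norm_triangle_ineq2 by blast
  have t2: "cmod (ah k) - cmod z \<le> cmod (z - ah k)" using norm_triangle_ineq3[of z "ah k"]
    by (metis norm_minus_commute norm_triangle_ineq2)
  have gap: "1/2 \<le> \<bar>real n - \<bar>of_int k + 1/2\<bar>\<bar>" by (rule halfint_gap)
  show "1/2 \<le> cmod (z - ah k)" using t1 t2 gap assms unfolding norm_ah by linarith
  have "\<bar>of_int k + 1/2\<bar> \<le> \<bar>of_int k\<bar> + (1/2::real)" by linarith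
  then show "real n - \<bar>of_int k\<bar> - 1/2 \<le> cmod (z - ah k)" using t1 assms unfolding norm_ah by linarith
qed

lemma near_sep:
  assumes "z \<in> ball (ah m) (1/2)" "k \<noteq> m"
  shows "1/2 \<le> cmod (z - ah k)"
proof -
  have "1 \<le> cmod (ah m - ah k)" using ah_dist_ge1 assms(2) by auto
  moreover have "cmod (ah m - ah k) \<le> cmod (ah m - z) + cmod (z - ah k)"
    using norm_triangle_ineq[of "ah m - z" "z - ah k"] by simp
  moreover have "cmod (ah m - z) < 1/2" using assms(1) by (simp add: dist_norm)
  ultimately show ?thesis by linarith
qed

context
  fixes r :: "int \<Rightarrow> complex"
  assumes rs: "(\<lambda>k. norm (r k)) summable_on UNIV"
begin

lemma Fs_holo_off: "Fs r UNIV holomorphic_on (- halfintC)"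
proof -
  have "\<exists>f'. (Fs r UNIV has_field_derivative f') (at x)" if x: "x \<in> - halfintC" for x
  proof -
    obtain e where e: "0 < e" "\<And>z k. z \<in> ball x e \<Longrightarrow> e \<le> cmod (z - ah k)"
      using sep_ball x by (metis ComplD)
    have "Fs r UNIV holomorphic_on ball x e"
      by (rule Fs_holo[OF rs _ e(1)]) (use e in auto)
    then have "Fs r UNIV field_differentiable (at x)"
      using holomorphic_on_imp_differentiable_at[of _ "ball x e" x] e(1) by auto
    then show ?thesis by (auto simp: field_differentiable_def)
  qed
  moreover have "open (- halfintC)" using closed_halfintC by (simp add: closed_def)
  ultimately show ?thesis by (simp add: holomorphic_on_open)
qed

lemma Fs_rest_holo: "Fs r (- {m}) holomorphic_on ball (ah m) (1/2)"
  by (rule Fs_holo[OF rs _ _ near_sep]) auto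

lemma Fs_rest_cont: "isCont (Fs r (- {m})) (ah m)"
proof -
  have "Fs r (- {m}) field_differentiable (at (ah m))"
    using holomorphic_on_imp_differentiable_at[OF Fs_rest_holo] by auto
  then show ?thesis by (rule field_differentiable_imp_continuous_at)
qed

lemma Fs_split:
  assumes "z \<in> ball (ah m) (1/2)"
  shows "Fs r UNIV z = r m / (z - ah m) + Fs r (- {m}) z"
proof -
  have s: "(\<lambda>k. r k / (z - ah k)) summable_on (- {m})"
    by (rule Fs_summable[OF rs, of "1/2"]) (use near_sep assms in auto)
  have "UNIV = insert m (- {m})" by auto
  then have "Fs r UNIV z = Fs r (insert m (- {m})) z" by simp
  also have "\<dots> = r m / (z - ah m) + Fs r (- {m}) z"
    unfolding Fs_def by (rule infsum_insert[OF s]) simp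
  finally show ?thesis .
qed

lemma Fs_pole: "((\<lambda>z. (z - ah m) * Fs r UNIV z) \<longlongrightarrow> r m) (at (ah m))"
proof -
  have c: "(Fs r (- {m}) \<longlongrightarrow> Fs r (- {m}) (ah m)) (at (ah m))"
    using Fs_rest_cont isCont_def by blast
  have "((\<lambda>z. r m + (z - ah m) * Fs r (- {m}) z) \<longlongrightarrow> r m + (ah m - ah m) * Fs r (- {m}) (ah m)) (at (ah m))"
    by (intro tendsto_intros c)
  then have l: "((\<lambda>z. r m + (z - ah m) * Fs r (- {m}) z) \<longlongrightarrow> r m) (at (ah m))" by simp
  have ev: "\<forall>\<^sub>F z in at (ah m). r m + (z - ah m) * Fs r (- {m}) z = (z - ah m) * Fs r UNIV z"
    using eventually_at_ball'[of "1/2::real" "ah m" UNIV, OF half_gt_zero[OF zero_less_one]]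
  proof (rule eventually_mono)
    fix z assume z: "z \<in> ball (ah m) (1/2) \<and> z \<noteq> ah m \<and> z \<in> UNIV"
    then have zb: "z \<in> ball (ah m) (1/2)" by simp
    show "r m + (z - ah m) * Fs r (- {m}) z = (z - ah m) * Fs r UNIV z"
      unfolding Fs_split[OF zb] using z by (simp add: field_simps)
  qed
  show ?thesis using l tendsto_cong[OF ev] by simp
qed

lemma Fs_circle:
  assumes e: "0 < e"
  shows "\<exists>N. \<forall>n\<ge>N. \<forall>z. cmod z = real n \<longrightarrow> cmod (Fs r UNIV z) \<le> e"
proof -
  have "\<forall>\<^sub>F X in finite_subsets_at_top (UNIV::int set). (\<Sum>\<^sub>\<infinity>k\<in>UNIV - X. norm (r k)) < e/4 \<and> finite X"
  proof (rule eventually_conj)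
    show "\<forall>\<^sub>F X in finite_subsets_at_top UNIV. (\<Sum>\<^sub>\<infinity>k\<in>UNIV - X. norm (r k)) < e/4"
      using tail_small[OF rs, of "e/4" UNIV] e by simp
  qed (rule eventually_finite_subsets_at_top_weakI)
  then obtain X where X: "(\<Sum>\<^sub>\<infinity>k\<in>UNIV - X. norm (r k)) < e/4" "finite X"
    using eventually_happens[of _ "finite_subsets_at_top UNIV"] by auto
  define R where "R = (\<Sum>\<^sub>\<infinity>k. norm (r k)) + 1"
  have R0: "0 \<le> (\<Sum>\<^sub>\<infinity>k. norm (r k))" by (rule infsum_nonneg) simp
  then have Rpos: "0 < R" unfolding R_def by simp
  define M where "M = (\<Sum>k\<in>X. \<bar>of_int k\<bar>::real)"
  have kM: "\<bar>of_int k\<bar> \<le> M" if "k \<in> X" for k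
    unfolding M_def using X(2) that by (intro member_le_sum) auto
  define N where "N = nat \<lceil>M + 1 + 4 * R / e\<rceil>"
  have sumX: "(\<Sum>k\<in>X. norm (r k)) \<le> R"
  proof -
    have "(\<Sum>k\<in>X. norm (r k)) \<le> (\<Sum>\<^sub>\<infinity>k. norm (r k))"
      by (rule finite_sum_le_infsum[OF rs X(2)]) auto
    then show ?thesis unfolding R_def by linarith
  qed
  have "cmod (Fs r UNIV z) \<le> e" if n: "N \<le> n" and z: "cmod z = real n" for n z
  proof -
    have nbig: "M + 1 + 4 * R / e \<le> real n" using n unfolding N_def by linarith
    have h: "(\<lambda>k. r k / (z - ah k)) summable_on UNIV"
      by (rule Fs_summable[OF rs, of "1/2"]) (use circle_sep(1)[OF z] in auto)
    have dec: "Fs r UNIV z - (\<Sum>k\<in>X. r k / (z - ah k)) = Fs r (UNIV - X) z"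
      by (rule Fs_diff_finite[OF rs, of "1/2"]) (use circle_sep(1)[OF z] X in auto)
    have t1: "cmod (Fs r (UNIV - X) z) \<le> (\<Sum>\<^sub>\<infinity>k\<in>UNIV - X. norm (r k)) / (1/2)"
      by (rule Fs_tail_bound[OF rs]) (use circle_sep(1)[OF z] in auto)
    have far: "4 * R / e \<le> cmod (z - ah k)" if "k \<in> X" for k
      using circle_sep(2)[OF z, of k] kM[OF that] nbig by linarith
    have qpos: "0 < 4 * R / e" using Rpos e by simp
    have t2: "cmod (\<Sum>k\<in>X. r k / (z - ah k)) \<le> (\<Sum>k\<in>X. norm (r k)) / (4 * R / e)"
    proof -
      have "cmod (\<Sum>k\<in>X. r k / (z - ah k)) \<le> (\<Sum>k\<in>X. cmod (r k / (z - ah k)))" by (rule norm_sum)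
      also have "\<dots> \<le> (\<Sum>k\<in>X. norm (r k) / (4 * R / e))"
      proof (rule sum_mono)
        fix k assume k: "k \<in> X"
        have "cmod (r k / (z - ah k)) = norm (r k) / cmod (z - ah k)" by (simp add: norm_divide)
        also have "\<dots> \<le> norm (r k) / (4 * R / e)"
        proof (rule divide_left_mono[OF far[OF k]])
          have p: "0 < cmod (z - ah k)" using far[OF k] qpos by linarith
          show "0 < cmod (z - ah k) * (4 * R / e)" by (rule mult_pos_pos[OF p qpos])
        qed simp
        finally show "cmod (r k / (z - ah k)) \<le> norm (r k) / (4 * R / e)" .
      qed
      also have "\<dots> = (\<Sum>k\<in>X. norm (r k)) / (4 * R / e)" by (rule sum_divide_distrib[symmetric])
      finally show ?thesis .
    qed
    have "(\<Sum>k\<in>X. norm (r k)) / (4 * R / e) \<le> R / (4 * R / e)"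
      using sumX qpos by (intro divide_right_mono) auto
    also have "\<dots> = e / 4" using Rpos e by (simp add: field_simps)
    finally have t2': "cmod (\<Sum>k\<in>X. r k / (z - ah k)) \<le> e/4" using t2 by linarith
    have "Fs r UNIV z = (\<Sum>k\<in>X. r k / (z - ah k)) + Fs r (UNIV - X) z" using dec by (simp add: algebra_simps)
    then have "cmod (Fs r UNIV z) \<le> cmod (\<Sum>k\<in>X. r k / (z - ah k)) + cmod (Fs r (UNIV - X) z)"
      by (simp add: norm_triangle_ineq)
    also have "\<dots> \<le> e/4 + (\<Sum>\<^sub>\<infinity>k\<in>UNIV - X. norm (r k)) / (1/2)"
      using t2' t1 by (rule add_mono)
    also have "\<dots> \<le> e/4 + (e/4) / (1/2)"
      using X(1) by (intro add_left_mono divide_right_mono) auto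
    also have "\<dots> \<le> e" using e by simp
    finally show ?thesis .
  qed
  then show ?thesis by blast
qed

end


definition JJ :: "real \<Rightarrow> int \<Rightarrow> real" where "JJ L n = besselJ n (2*L)"

lemma pow_om: "0 \<le> L \<Longrightarrow> L \<le> 1/2 \<Longrightarrow> L ^ nat \<bar>n\<bar> \<le> om n"
  unfolding om_def by (intro power_mono) auto

lemma JJ_bound: "0 \<le> L \<Longrightarrow> L \<le> 1 \<Longrightarrow> \<bar>JJ L n\<bar> \<le> 3 * L ^ nat \<bar>n\<bar>"
  unfolding JJ_def by (rule besselJ_bound3)

lemma JJ_le3: "0 \<le> L \<Longrightarrow> L \<le> 1 \<Longrightarrow> \<bar>JJ L n\<bar> \<le> 3"
proof -
  assume "0 \<le> L" "L \<le> 1"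
  then have "L ^ nat \<bar>n\<bar> \<le> 1" by (simp add: power_le_one)
  then show ?thesis using JJ_bound[OF \<open>0 \<le> L\<close> \<open>L \<le> 1\<close>, of n] by linarith
qed

lemma JJ_om: "0 \<le> L \<Longrightarrow> L \<le> 1/2 \<Longrightarrow> \<bar>JJ L n\<bar> \<le> 3 * om n"
  using JJ_bound[of L n] pow_om[of L n] by linarith

lemma om_shift: "om (n+1) \<le> 2 * om n"
proof -
  have "nat \<bar>n\<bar> \<le> nat \<bar>n+1\<bar> + 1" by linarith
  then have "(1/2::real) ^ (nat \<bar>n+1\<bar> + 1) \<le> (1/2) ^ nat \<bar>n\<bar>" by (intro power_decreasing) auto
  then show ?thesis unfolding om_def by simp
qed

lemma JJ_om1: "0 \<le> L \<Longrightarrow> L \<le> 1/2 \<Longrightarrow> \<bar>JJ L (n+1)\<bar> \<le> 6 * om n"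
  using JJ_om[of L "n+1"] om_shift[of n] by linarith

lemma LJJ_shift: "0 \<le> L \<Longrightarrow> L \<le> 1 \<Longrightarrow> L * \<bar>JJ L (n+1)\<bar> \<le> 3 * L ^ nat \<bar>n\<bar>"
proof -
  assume L: "0 \<le> L" "L \<le> 1"
  have "L * \<bar>JJ L (n+1)\<bar> \<le> L * (3 * L ^ nat \<bar>n+1\<bar>)" using JJ_bound[OF L] L by (intro mult_left_mono) auto
  also have "\<dots> = 3 * L ^ (nat \<bar>n+1\<bar> + 1)" by (simp add: algebra_simps)
  also have "\<dots> \<le> 3 * L ^ nat \<bar>n\<bar>"
  proof -
    have "nat \<bar>n\<bar> \<le> nat \<bar>n+1\<bar> + 1" by linarith
    then have "L ^ (nat \<bar>n+1\<bar> + 1) \<le> L ^ nat \<bar>n\<bar>" using L by (intro power_decreasing) auto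
    then show ?thesis by simp
  qed
  finally show ?thesis .
qed

lemma pow_tailgen:
  fixes L :: real
  assumes L: "0 \<le> L" "L \<le> 1/2" and e: "j \<le> e"
  shows "L ^ (2 * e) \<le> 4^j * L^(2*j) * (1/2)^e"
proof -
  have ex: "2*e = 2*j + (2*e - 2*j)" using e by simp
  have h: "2*j + (2*e - 2*j) = 2*e" using e by simp
  have a: "L ^ (2*e) = L^(2*j) * L^(2*e - 2*j)" using power_add[of L "2*j" "2*e - 2*j"] unfolding h .
  have b: "L^(2*e - 2*j) \<le> (1/2)^(2*e - 2*j)" using L by (intro power_mono) auto
  have c: "(1/2::real)^(2*e - 2*j) = 4^j * ((1/2)^e * (1/2)^e)"
  proof -
    have "(1/2::real)^(2*e - 2*j) * (1/2)^(2*j) = (1/2)^(2*e)"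
      by (simp only: power_add[symmetric] add.commute[of "2*e - 2*j"] ex[symmetric])
    moreover have "(1/2::real)^(2*j) = 1 / 4^j" by (simp add: power_mult power_divide)
    moreover have "(1/2::real)^(2*e) = (1/2)^e * (1/2)^e" by (simp add: power_add[symmetric] mult_2)
    ultimately show ?thesis by (simp add: field_simps)
  qed
  have d: "(1/2::real)^e * (1/2)^e \<le> (1/2)^e" by (simp add: power_le_one mult_left_le)
  have "L ^ (2*e) \<le> L^(2*j) * (1/2)^(2*e - 2*j)" unfolding a using b L by (intro mult_left_mono) auto
  also have "\<dots> = L^(2*j) * 4^j * ((1/2)^e * (1/2)^e)" unfolding c by simp
  also have "\<dots> \<le> L^(2*j) * 4^j * (1/2)^e" using d L by (intro mult_left_mono) auto
  finally show ?thesis by (simp add: mult_ac)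
qed

lemma pow_tail4:
  assumes L: "0 \<le> L" "L \<le> 1/2" and n: "2 \<le> \<bar>n\<bar>"
  shows "L ^ (2 * nat \<bar>n\<bar>) \<le> 16 * L^4 * om n"
  using pow_tailgen[OF L, of 2 "nat \<bar>n\<bar>"] n unfolding om_def by simp

lemma pow_tail2:
  assumes L: "0 \<le> L" "L \<le> 1/2" and n: "n \<noteq> 0"
  shows "L ^ (2 * nat \<bar>n\<bar>) \<le> 4 * L^2 * om n"
  using pow_tailgen[OF L, of 1 "nat \<bar>n\<bar>"] n unfolding om_def by simp

lemma JJsq_summable: "0 \<le> L \<Longrightarrow> L \<le> 1/2 \<Longrightarrow> (\<lambda>n. (JJ L n)^2) summable_on A"
proof (rule summable_by_om[of _ 9])
  fix n assume L: "0 \<le> L" "L \<le> 1/2"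
  have "\<bar>JJ L n\<bar> \<le> 3 * om n" by (rule JJ_om[OF L])
  moreover have "om n \<le> 1" unfolding om_def by (simp add: power_le_one)
  ultimately have "\<bar>JJ L n\<bar> * \<bar>JJ L n\<bar> \<le> (3 * om n) * 3" by (intro mult_mono) auto
  then show "\<bar>(JJ L n)^2\<bar> \<le> 9 * om n" by (simp add: power2_eq_square abs_mult)
qed

lemma KBe_infsum:
  assumes L: "0 \<le> L" "L \<le> 1/2"
  shows "KBe L m = (\<Sum>\<^sub>\<infinity>n\<in>{m<..}. (JJ L n)^2)"
proof -
  define h where "h k = m + int k + 1" for k :: nat
  have inj: "inj_on h UNIV" unfolding h_def inj_on_def by auto
  have rng: "h ` UNIV = {m<..}"
  proof
    show "h ` UNIV \<subseteq> {m<..}" unfolding h_def by auto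
    show "{m<..} \<subseteq> h ` UNIV"
    proof
      fix n assume "n \<in> {m<..}"
      then have "n = h (nat (n - m - 1))" unfolding h_def by simp
      then show "n \<in> h ` UNIV" by blast
    qed
  qed
  have s1: "(\<lambda>n. (JJ L n)^2) summable_on (h ` UNIV)" by (rule JJsq_summable[OF L])
  then have s2: "((\<lambda>n. (JJ L n)^2) \<circ> h) summable_on UNIV" using summable_on_reindex[OF inj] by blast
  have eq: "(\<Sum>\<^sub>\<infinity>n\<in>h ` UNIV. (JJ L n)^2) = (\<Sum>\<^sub>\<infinity>k. ((\<lambda>n. (JJ L n)^2) \<circ> h) k)"
    by (rule infsum_reindex[OF inj])
  have sm: "summable ((\<lambda>n. (JJ L n)^2) \<circ> h)"
    using s2 summable_on_UNIV_nonneg_real_iff[of "(\<lambda>n. (JJ L n)^2) \<circ> h"] by simp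
  have "(((\<lambda>n. (JJ L n)^2) \<circ> h) has_sum suminf ((\<lambda>n. (JJ L n)^2) \<circ> h)) UNIV"
    by (rule sums_nonneg_imp_has_sum) (use sm summable_sums in auto)
  then have "(\<Sum>\<^sub>\<infinity>k. ((\<lambda>n. (JJ L n)^2) \<circ> h) k) = suminf ((\<lambda>n. (JJ L n)^2) \<circ> h)"
    by (rule infsumI)
  moreover have "KBe L m = suminf ((\<lambda>n. (JJ L n)^2) \<circ> h)"
    unfolding KBe_def JJ_def h_def by (simp add: o_def add_ac)
  ultimately show ?thesis using eq rng by simp
qed

lemma KBe_nonneg: "0 \<le> L \<Longrightarrow> L \<le> 1/2 \<Longrightarrow> 0 \<le> KBe L m"
  by (simp add: KBe_infsum infsum_nonneg)

lemma exp_sq_bound: "0 \<le> L \<Longrightarrow> L \<le> 1/2 \<Longrightarrow> (JJ L 0)^2 \<le> 1 + 4 * L^2"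
proof -
  assume L: "0 \<le> L" "L \<le> 1/2"
  have "\<bar>JJ L 0\<bar> \<le> exp (L^2)" using besselJ_bound[OF L(1), of 0] unfolding JJ_def by simp
  then have "(JJ L 0)^2 \<le> (exp (L^2))^2"
    by (metis abs_ge_zero power2_abs power_mono)
  also have "\<dots> = exp (2 * L^2)" by (simp add: exp_double[symmetric] power2_eq_square exp_add[symmetric])
  also have "\<dots> \<le> 1 + 2 * (2 * L^2)"
  proof -
    have "L*L \<le> (1/2)*(1/2)" using L by (intro mult_mono) auto
    then have "norm (2 * L^2) \<le> 1/2" by (simp add: power2_eq_square)
    then have "norm (exp (2 * L^2)) \<le> 1 + 2 * norm (2 * L^2)" by (rule exp_bound_lemma)
    then show ?thesis by simp
  qed
  finally show ?thesis by simp
qed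

definition KK :: real where "KK = 4 + 36 * Wom"

lemma KBe_upper:
  assumes L: "0 \<le> L" "L \<le> 1/2"
  shows "KBe L m \<le> 1 + KK * L^2" and "0 \<le> m \<Longrightarrow> KBe L m \<le> KK * L^2"
proof -
  have tb: "\<bar>(JJ L n)^2\<bar> \<le> (36 * L^2) * om n" if "n \<noteq> 0" for n
  proof -
    have "\<bar>JJ L n\<bar> \<le> 3 * L ^ nat \<bar>n\<bar>" using JJ_bound[of L n] L by simp
    then have "\<bar>JJ L n\<bar>^2 \<le> (3 * L ^ nat \<bar>n\<bar>)^2" by (intro power_mono) auto
    also have "\<dots> = 9 * L ^ (2 * nat \<bar>n\<bar>)" by (simp add: power_mult_distrib power_mult[symmetric] mult.commute)
    also have "\<dots> \<le> 9 * (4 * L^2 * om n)" by (intro mult_left_mono pow_tail2[OF L that]) simp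
    finally show ?thesis by simp
  qed
  define g where "g n = (if n = 0 then 0 else (JJ L n)^2)" for n :: int
  have gb: "\<bar>g n\<bar> \<le> (36 * L^2) * om n" for n
  proof -
    have "0 \<le> (36 * L^2) * om n" using om_pos[of n] by (intro mult_nonneg_nonneg) auto
    then show ?thesis using tb[of n] unfolding g_def by (cases "n = 0") auto
  qed
  have gsum: "(\<Sum>\<^sub>\<infinity>n\<in>A. g n) \<le> 36 * L^2 * Wom" for A
    using infsum_by_om[OF gb, of A] by simp
  have gs: "g summable_on A" for A by (rule summable_by_om[OF gb])
  have s: "(\<lambda>n. (JJ L n)^2) summable_on A" for A by (rule JJsq_summable[OF L])
  have dsum: "(\<lambda>n::int. if n = 0 then (JJ L 0)^2 else 0) summable_on A" for A
  proof (rule summable_by_om[of _ "(JJ L 0)^2"])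
    fix n :: int
    show "\<bar>if n = 0 then (JJ L 0)^2 else 0\<bar> \<le> (JJ L 0)^2 * om n"
      using om_pos[of n] by (auto simp: om_def)
  qed
  have split: "(\<Sum>\<^sub>\<infinity>n\<in>A. (JJ L n)^2) \<le> (JJ L 0)^2 + (\<Sum>\<^sub>\<infinity>n\<in>A. g n)" for A
  proof -
    have "(\<Sum>\<^sub>\<infinity>n\<in>A. (JJ L n)^2) \<le> (\<Sum>\<^sub>\<infinity>n\<in>A. (if n = 0 then (JJ L 0)^2 else 0) + g n)"
    proof (rule infsum_mono[OF s])
      show "(\<lambda>n. (if n = 0 then (JJ L 0)^2 else 0) + g n) summable_on A"
        by (intro summable_on_add gs dsum)
    qed (auto simp: g_def)
    also have "\<dots> = (\<Sum>\<^sub>\<infinity>n\<in>A. (if n = 0 then (JJ L 0)^2 else 0)) + (\<Sum>\<^sub>\<infinity>n\<in>A. g n)"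
      by (rule infsum_add[OF dsum gs])
    also have "(\<Sum>\<^sub>\<infinity>n\<in>A. (if n = 0 then (JJ L 0)^2 else 0)) \<le> (JJ L 0)^2"
    proof -
      have "(\<Sum>\<^sub>\<infinity>n\<in>A. (if n = 0 then (JJ L 0)^2 else 0)) = (\<Sum>\<^sub>\<infinity>n\<in>A \<inter> {0}. (JJ L 0)^2)"
        by (rule infsum_cong_neutral) auto
      also have "\<dots> \<le> (JJ L 0)^2"
      proof (cases "0 \<in> A")
        case True then have "A \<inter> {0} = {0}" by auto
        then show ?thesis by simp
      next
        case False then have "A \<inter> {0} = {}" by auto
        then show ?thesis by simp
      qed
      finally show ?thesis .
    qed
    finally show ?thesis by simp
  qed
  show "KBe L m \<le> 1 + KK * L^2"
    using split[of "{m<..}"] gsum[of "{m<..}"] exp_sq_bound[OF L] unfolding KBe_infsum[OF L] KK_def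
    by (simp add: algebra_simps)
  assume m: "0 \<le> m"
  have "(\<Sum>\<^sub>\<infinity>n\<in>{m<..}. (JJ L n)^2) = (\<Sum>\<^sub>\<infinity>n\<in>{m<..}. g n)"
    by (rule infsum_cong) (use m in \<open>auto simp: g_def\<close>)
  also have "\<dots> \<le> 36 * L^2 * Wom" by (rule gsum)
  also have "\<dots> \<le> KK * L^2" unfolding KK_def using L by (simp add: algebra_simps)
  finally show "KBe L m \<le> KK * L^2" unfolding KBe_infsum[OF L] .
qed


lemma infsum_sub:
  fixes f g :: "int \<Rightarrow> real"
  assumes "f summable_on A" "g summable_on A"
  shows "(\<Sum>\<^sub>\<infinity>k\<in>A. f k) - (\<Sum>\<^sub>\<infinity>k\<in>A. g k) = (\<Sum>\<^sub>\<infinity>k\<in>A. f k - g k)"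
proof -
  have "(\<Sum>\<^sub>\<infinity>k\<in>A. f k + (- g k)) = (\<Sum>\<^sub>\<infinity>k\<in>A. f k) + (\<Sum>\<^sub>\<infinity>k\<in>A. - g k)"
    by (rule infsum_add[OF assms(1)]) (use assms(2) summable_on_uminus in blast)
  then show ?thesis by (simp add: infsum_uminus)
qed

locale rhs =
  fixes \<sigma> :: "real \<Rightarrow> real" and s \<theta> :: real
  assumes tau01: "\<And>m::int. 0 \<le> \<sigma> (of_int m + 1/2 - s - 1/2) \<and> \<sigma> (of_int m + 1/2 - s - 1/2) \<le> 1"
    and tauneg: "\<And>m::int. m < 0 \<Longrightarrow> \<sigma> (of_int m + 1/2 - s - 1/2) \<le> \<theta>"
    and th0: "0 \<le> \<theta>" and th1: "\<theta> < 1"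
begin

definition tau :: "int \<Rightarrow> real" where "tau m = \<sigma> (of_int m + 1/2 - s - 1/2)"
definition dl :: real where "dl = (1 - \<theta>)/2"
definition Cc :: real where "Cc = 1 / dl"
definition L0 :: real where "L0 = min (1/2) (min (2 * dl / KK) (1 / (54 * Cc * Wom)))"
definition cc :: "real \<Rightarrow> int \<Rightarrow> real" where "cc L m = tau m / (1 - Ms \<sigma> s L m)"
definition Aco :: "real \<Rightarrow> int \<Rightarrow> int \<Rightarrow> real" where
  "Aco L m k = (if k = m then 0 else L * (JJ L (k+1) * JJ L m - JJ L k * JJ L (m+1)) / of_int (m - k))"

lemma tau_01: "0 \<le> tau m" "tau m \<le> 1" using tau01[of m] unfolding tau_def by auto

lemma dl_pos: "0 < dl" and dl_half: "dl \<le> 1/2"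
  unfolding dl_def using th0 th1 by auto

lemma KK_pos: "0 < KK" unfolding KK_def using Wom_pos by simp

lemma Cc_pos: "0 < Cc" unfolding Cc_def using dl_pos by simp

lemma L0_pos: "0 < L0"
  unfolding L0_def using dl_pos KK_pos Cc_pos Wom_pos by auto

lemma L0_le: "L0 \<le> 1/2" unfolding L0_def by simp

lemma Ms_eq: "Ms \<sigma> s L m = tau m * KBe L m" unfolding Ms_def tau_def ..

lemma den_bound:
  assumes L: "0 \<le> L" "L \<le> L0"
  shows "dl \<le> 1 - Ms \<sigma> s L m"
proof -
  have L2: "L \<le> 1/2" using L L0_le by linarith
  have "L \<le> 2 * dl / KK" using L unfolding L0_def by linarith
  then have "KK * L \<le> 2 * dl" using KK_pos by (simp add: field_simps)
  moreover have "KK * L^2 \<le> KK * L * (1/2)"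
  proof -
    have "L*L \<le> L*(1/2)" using L L2 by (intro mult_left_mono) auto
    then have "KK * (L*L) \<le> KK * (L*(1/2))" by (rule mult_left_mono) (use KK_pos in auto)
    then show ?thesis by (simp only: power2_eq_square mult.assoc)
  qed
  ultimately have KL: "KK * L^2 \<le> dl" by linarith
  have kb0: "0 \<le> KBe L m" by (rule KBe_nonneg[OF L(1) L2])
  show ?thesis
  proof (cases "0 \<le> m")
    case True
    have "Ms \<sigma> s L m \<le> 1 * KBe L m" unfolding Ms_eq using tau_01 kb0 by (intro mult_right_mono) auto
    also have "\<dots> \<le> KK * L^2" using KBe_upper(2)[OF L(1) L2 True] by simp
    finally show ?thesis using KL dl_half by linarith
  next
    case False
    then have tm: "tau m \<le> \<theta>" using tauneg[of m] unfolding tau_def by simp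
    have "Ms \<sigma> s L m \<le> \<theta> * KBe L m" unfolding Ms_eq using tm kb0 by (intro mult_right_mono) auto
    also have "\<dots> \<le> \<theta> * (1 + KK * L^2)" using KBe_upper(1)[OF L(1) L2] th0 by (intro mult_left_mono) auto
    also have "\<dots> \<le> \<theta> + KK * L^2"
    proof -
      have "\<theta> * (KK * L^2) \<le> 1 * (KK * L^2)" using th1 KK_pos by (intro mult_right_mono) auto
      then show ?thesis by (simp add: algebra_simps)
    qed
    finally have "Ms \<sigma> s L m \<le> \<theta> + dl" using KL by linarith
    moreover have "1 - \<theta> - dl = dl" unfolding dl_def by (simp add: field_simps)
    ultimately show ?thesis by linarith
  qed
qed

lemma cc_bound:
  assumes L: "0 \<le> L" "L \<le> L0"
  shows "0 \<le> cc L m" "cc L m \<le> Cc"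
proof -
  have d: "dl \<le> 1 - Ms \<sigma> s L m" by (rule den_bound[OF L])
  then have dp: "0 < 1 - Ms \<sigma> s L m" using dl_pos by linarith
  show "0 \<le> cc L m" unfolding cc_def using tau_01 dp by simp
  have "cc L m \<le> 1 / (1 - Ms \<sigma> s L m)" unfolding cc_def using tau_01 dp by (simp add: divide_right_mono)
  also have "\<dots> \<le> 1 / dl" using d dl_pos by (simp add: frac_le)
  finally show "cc L m \<le> Cc" unfolding Cc_def .
qed

lemma Aco_bound0:
  assumes L: "0 \<le> L" "L \<le> 1"
  shows "\<bar>Aco L m k\<bar> \<le> L * (\<bar>JJ L (k+1)\<bar> * \<bar>JJ L m\<bar> + \<bar>JJ L k\<bar> * \<bar>JJ L (m+1)\<bar>)"
proof (cases "k = m")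
  case True then show ?thesis unfolding Aco_def using L by (simp add: mult_nonneg_nonneg)
next
  case False
  then have d: "1 \<le> \<bar>of_int (m - k)::real\<bar>" by linarith
  have "\<bar>Aco L m k\<bar> = L * \<bar>JJ L (k+1) * JJ L m - JJ L k * JJ L (m+1)\<bar> / \<bar>of_int (m - k)\<bar>"
    unfolding Aco_def using False L by (simp add: abs_mult abs_divide)
  also have "\<dots> \<le> L * \<bar>JJ L (k+1) * JJ L m - JJ L k * JJ L (m+1)\<bar>"
  proof -
    have "L * \<bar>JJ L (k+1) * JJ L m - JJ L k * JJ L (m+1)\<bar> / \<bar>of_int (m - k)\<bar> \<le> L * \<bar>JJ L (k+1) * JJ L m - JJ L k * JJ L (m+1)\<bar> / 1"
      by (rule divide_left_mono) (use d L in auto)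
    then show ?thesis by simp
  qed
  also have "\<dots> \<le> L * (\<bar>JJ L (k+1)\<bar> * \<bar>JJ L m\<bar> + \<bar>JJ L k\<bar> * \<bar>JJ L (m+1)\<bar>)"
    using L by (intro mult_left_mono) (auto simp: abs_mult[symmetric] abs_triangle_ineq4)
  finally show ?thesis .
qed

lemma Aco_om:
  assumes L: "0 \<le> L" "L \<le> 1/2"
  shows "\<bar>Aco L m k\<bar> \<le> 27 * L * om k"
proof -
  have "\<bar>JJ L (k+1)\<bar> * \<bar>JJ L m\<bar> \<le> (6 * om k) * 3"
    using JJ_om1[OF L, of k] JJ_le3[of L m] L by (intro mult_mono) auto
  moreover have "\<bar>JJ L k\<bar> * \<bar>JJ L (m+1)\<bar> \<le> (3 * om k) * 3"
    using JJ_om[OF L, of k] JJ_le3[of L "m+1"] L by (intro mult_mono) auto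
  ultimately have "L * (\<bar>JJ L (k+1)\<bar> * \<bar>JJ L m\<bar> + \<bar>JJ L k\<bar> * \<bar>JJ L (m+1)\<bar>) \<le> L * (27 * om k)"
    using L by (intro mult_left_mono) auto
  then show ?thesis using Aco_bound0[of L m k] L by simp
qed

lemma Aco_decay:
  assumes L: "0 \<le> L" "L \<le> 1/2"
  shows "\<bar>Aco L m k\<bar> \<le> (6 * L * (\<bar>JJ L m\<bar> + \<bar>JJ L (m+1)\<bar>)) * om k"
proof -
  have "\<bar>JJ L (k+1)\<bar> * \<bar>JJ L m\<bar> \<le> (6 * om k) * \<bar>JJ L m\<bar>"
    using JJ_om1[OF L, of k] by (intro mult_right_mono) auto
  moreover have "\<bar>JJ L k\<bar> * \<bar>JJ L (m+1)\<bar> \<le> (6 * om k) * \<bar>JJ L (m+1)\<bar>"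
    using JJ_om[OF L, of k] om_pos[of k] by (intro mult_right_mono) auto
  ultimately have "L * (\<bar>JJ L (k+1)\<bar> * \<bar>JJ L m\<bar> + \<bar>JJ L k\<bar> * \<bar>JJ L (m+1)\<bar>) \<le> L * ((6 * om k) * \<bar>JJ L m\<bar> + (6 * om k) * \<bar>JJ L (m+1)\<bar>)"
    using L by (intro mult_left_mono) auto
  then show ?thesis using Aco_bound0[of L m k] L by (simp add: algebra_simps)
qed

lemma Aco_tail:
  assumes L: "0 \<le> L" "L \<le> 1/2"
  shows "\<bar>Aco L m k\<bar> \<le> 18 * L ^ nat \<bar>k\<bar>"
proof -
  have a: "\<bar>JJ L (k+1)\<bar> * \<bar>JJ L m\<bar> * L \<le> (3 * L ^ nat \<bar>k\<bar>) * 3"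
  proof -
    have "\<bar>JJ L (k+1)\<bar> * \<bar>JJ L m\<bar> * L = (L * \<bar>JJ L (k+1)\<bar>) * \<bar>JJ L m\<bar>" by simp
    also have "\<dots> \<le> (3 * L ^ nat \<bar>k\<bar>) * 3"
      by (rule mult_mono[OF LJJ_shift[of L k] JJ_le3[of L m]]) (use L in auto)
    finally show ?thesis .
  qed
  have b: "\<bar>JJ L k\<bar> * \<bar>JJ L (m+1)\<bar> * L \<le> (3 * L ^ nat \<bar>k\<bar>) * 3"
  proof -
    have "\<bar>JJ L k\<bar> * \<bar>JJ L (m+1)\<bar> * L \<le> \<bar>JJ L k\<bar> * \<bar>JJ L (m+1)\<bar> * 1"
      using L by (intro mult_left_mono) auto
    also have "\<dots> \<le> (3 * L ^ nat \<bar>k\<bar>) * 3"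
      using mult_mono[OF JJ_bound[of L k] JJ_le3[of L "m+1"]] L by simp
    finally show ?thesis .
  qed
  show ?thesis using Aco_bound0[of L m k] L a b by (simp add: algebra_simps)
qed

lemma Asum:
  assumes L: "0 \<le> L" "L \<le> 1/2" and u: "\<And>k. \<bar>u k\<bar> \<le> U"
  shows "(\<lambda>k. Aco L m k * u k) summable_on A" "\<bar>\<Sum>\<^sub>\<infinity>k\<in>A. Aco L m k * u k\<bar> \<le> 27 * L * U * Wom"
proof -
  have b: "\<bar>Aco L m k * u k\<bar> \<le> (27 * L * U) * om k" for k
  proof -
    have "\<bar>Aco L m k * u k\<bar> = \<bar>Aco L m k\<bar> * \<bar>u k\<bar>" by (simp add: abs_mult)
    also have "\<dots> \<le> (27 * L * om k) * U"
      by (rule mult_mono[OF Aco_om[OF L] u]) (use L om_pos[of k] in auto)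
    finally show ?thesis by (simp add: mult_ac)
  qed
  show "(\<lambda>k. Aco L m k * u k) summable_on A" by (rule summable_by_om[OF b])
  show "\<bar>\<Sum>\<^sub>\<infinity>k\<in>A. Aco L m k * u k\<bar> \<le> 27 * L * U * Wom" by (rule infsum_by_om[OF b])
qed

definition alpha :: "real \<Rightarrow> real" where "alpha L = Cc * 27 * Wom * L"

lemma alpha_le:
  assumes L: "0 \<le> L" "L \<le> L0" shows "0 \<le> alpha L" "alpha L \<le> 1/2"
proof -
  show "0 \<le> alpha L" unfolding alpha_def using L Cc_pos Wom_pos by simp
  have "L \<le> 1 / (54 * Cc * Wom)" using L unfolding L0_def by linarith
  then have "L * (54 * Cc * Wom) \<le> 1" using Cc_pos Wom_pos by (simp add: field_simps)
  then show "alpha L \<le> 1/2" unfolding alpha_def by (simp add: algebra_simps)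
qed

definition Phi :: "real \<Rightarrow> (int \<Rightarrow> real) \<Rightarrow> (int \<Rightarrow> real) \<Rightarrow> int \<Rightarrow> real" where
  "Phi L f u m = cc L m * (f m + (\<Sum>\<^sub>\<infinity>k. Aco L m k * u k))"

lemma Phi_bound:
  assumes L: "0 \<le> L" "L \<le> L0" and f: "\<And>m. \<bar>f m\<bar> \<le> Bf" and u: "\<And>k. \<bar>u k\<bar> \<le> U"
  shows "\<bar>Phi L f u m\<bar> \<le> Cc * Bf + alpha L * U"
proof -
  have L2: "L \<le> 1/2" using L L0_le by linarith
  have "\<bar>\<Sum>\<^sub>\<infinity>k. Aco L m k * u k\<bar> \<le> 27 * L * U * Wom" by (rule Asum(2)[OF L(1) L2]) (rule u)
  then have "\<bar>f m + (\<Sum>\<^sub>\<infinity>k. Aco L m k * u k)\<bar> \<le> Bf + 27 * L * U * Wom"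
    using f[of m] by linarith
  then have "\<bar>Phi L f u m\<bar> \<le> Cc * (Bf + 27 * L * U * Wom)"
    unfolding Phi_def using cc_bound[OF L, of m] by (simp add: abs_mult mult_mono)
  then show ?thesis unfolding alpha_def by (simp add: algebra_simps)
qed

lemma Phi_contr:
  assumes L: "0 \<le> L" "L \<le> L0" and u: "\<And>k. \<bar>u k\<bar> \<le> U" and v: "\<And>k. \<bar>v k\<bar> \<le> V"
    and d: "\<And>k. \<bar>u k - v k\<bar> \<le> D"
  shows "\<bar>Phi L f u m - Phi L f v m\<bar> \<le> alpha L * D"
proof -
  have L2: "L \<le> 1/2" using L L0_le by linarith
  have "Phi L f u m - Phi L f v m = cc L m * ((\<Sum>\<^sub>\<infinity>k. Aco L m k * u k) - (\<Sum>\<^sub>\<infinity>k. Aco L m k * v k))"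
    unfolding Phi_def by (simp add: algebra_simps)
  also have "(\<Sum>\<^sub>\<infinity>k. Aco L m k * u k) - (\<Sum>\<^sub>\<infinity>k. Aco L m k * v k) = (\<Sum>\<^sub>\<infinity>k. Aco L m k * (u k - v k))"
    using infsum_sub[OF Asum(1)[OF L(1) L2 u] Asum(1)[OF L(1) L2 v]] by (simp add: algebra_simps)
  finally have e: "Phi L f u m - Phi L f v m = cc L m * (\<Sum>\<^sub>\<infinity>k. Aco L m k * (u k - v k))" .
  have "\<bar>\<Sum>\<^sub>\<infinity>k. Aco L m k * (u k - v k)\<bar> \<le> 27 * L * D * Wom"
    by (rule Asum(2)[OF L(1) L2]) (rule d)
  then have "\<bar>Phi L f u m - Phi L f v m\<bar> \<le> Cc * (27 * L * D * Wom)"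
    unfolding e using cc_bound[OF L, of m] by (simp add: abs_mult mult_mono)
  then show ?thesis unfolding alpha_def by (simp add: algebra_simps)
qed

lemma zero_by_geom:
  fixes c K a :: real
  assumes "0 \<le> a" "a < 1" "\<And>n. c \<le> K * a ^ n"
  shows "c \<le> 0"
proof -
  have "(\<lambda>n. K * a ^ n) \<longlonglongrightarrow> K * 0"
    using assms(1,2) by (intro tendsto_mult tendsto_const LIMSEQ_power_zero) auto
  then show ?thesis using assms(3) by (intro LIMSEQ_le_const[of "\<lambda>n. K * a ^ n"]) auto
qed

lemma fixpt:
  assumes L: "0 \<le> L" "L \<le> L0" and f: "\<And>m. \<bar>f m\<bar> \<le> Bf"
  shows "\<exists>x. (\<forall>m. \<bar>x m\<bar> \<le> 2 * Cc * Bf) \<and> (\<forall>m. x m = Phi L f x m)"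
proof -
  have Bf: "0 \<le> Bf" using f[of 0] by linarith
  define B where "B = 2 * Cc * Bf"
  have B0: "0 \<le> B" unfolding B_def using Cc_pos Bf by simp
  define a where "a = alpha L"
  have a0: "0 \<le> a" and a1: "a \<le> 1/2" using alpha_le[OF L] unfolding a_def by auto
  define xs where "xs n = (Phi L f ^^ n) (\<lambda>_. 0)" for n
  have xs_Suc: "xs (Suc n) = Phi L f (xs n)" for n unfolding xs_def by simp
  have xsb: "\<bar>xs n m\<bar> \<le> B" for n m
  proof (induction n arbitrary: m)
    case 0 then show ?case using B0 by (simp add: xs_def)
  next
    case (Suc n)
    have "\<bar>Phi L f (xs n) m\<bar> \<le> Cc * Bf + a * B" unfolding a_def by (rule Phi_bound[OF L f Suc.IH])
    also have "\<dots> \<le> Cc * Bf + (1/2) * B" using a1 B0 by (intro add_left_mono mult_right_mono) auto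
    also have "\<dots> = B" unfolding B_def by simp
    finally show ?case by (simp add: xs_Suc)
  qed
  have xsd: "\<bar>xs (Suc n) m - xs n m\<bar> \<le> B * a ^ n" for n m
  proof (induction n arbitrary: m)
    case 0 then show ?case using xsb[of 1 m] by (simp add: xs_def)
  next
    case (Suc n)
    have "\<bar>Phi L f (xs (Suc n)) m - Phi L f (xs n) m\<bar> \<le> a * (B * a ^ n)"
      using Phi_contr[OF L xsb xsb Suc.IH] by (simp add: a_def)
    then show ?case by (simp add: xs_Suc[of "Suc n"] xs_Suc[of n] mult_ac)
  qed
  have gs: "(\<Sum>j<k. a ^ j) \<le> 2" for k
  proof -
    have "(\<Sum>j<k. a ^ j) \<le> (\<Sum>j. a ^ j)"
      by (rule sum_le_suminf) (use a0 a1 in \<open>auto intro!: summable_geometric\<close>)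
    also have "\<dots> = 1 / (1 - a)" by (rule suminf_geometric) (use a0 a1 in auto)
    also have "\<dots> \<le> 2" using a0 a1 by (simp add: field_simps)
    finally show ?thesis .
  qed
  have cauchy: "\<bar>xs (n + k) m - xs n m\<bar> \<le> 2 * B * a ^ n" for n k m
  proof -
    have "\<bar>xs (n + k) m - xs n m\<bar> \<le> B * a ^ n * (\<Sum>j<k. a ^ j)"
    proof (induction k)
      case 0 then show ?case by simp
    next
      case (Suc k)
      have "\<bar>xs (n + Suc k) m - xs n m\<bar> \<le> \<bar>xs (Suc (n + k)) m - xs (n + k) m\<bar> + \<bar>xs (n + k) m - xs n m\<bar>"
        by simp
      also have "\<dots> \<le> B * a ^ (n + k) + B * a ^ n * (\<Sum>j<k. a ^ j)" using xsd Suc.IH by (intro add_mono)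
      also have "\<dots> = B * a ^ n * (\<Sum>j<Suc k. a ^ j)" by (simp add: algebra_simps power_add)
      finally show ?case .
    qed
    also have "\<dots> \<le> B * a ^ n * 2" using gs[of k] B0 a0 by (intro mult_left_mono) auto
    finally show ?thesis by (simp add: mult_ac)
  qed
  define x where "x m = xs 0 m + (\<Sum>j. xs (Suc j) m - xs j m)" for m
  have conv: "(\<lambda>n. xs n m) \<longlonglongrightarrow> x m" for m
  proof -
    have sm: "summable (\<lambda>j. xs (Suc j) m - xs j m)"
    proof (rule summable_comparison_test[of _ "\<lambda>j. B * a ^ j"])
      show "\<exists>N. \<forall>n\<ge>N. norm (xs (Suc n) m - xs n m) \<le> B * a ^ n" using xsd by auto
      show "summable (\<lambda>j. B * a ^ j)" using a0 a1 by (intro summable_mult summable_geometric) auto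
    qed
    have "(\<lambda>n. \<Sum>j<n. xs (Suc j) m - xs j m) \<longlonglongrightarrow> (\<Sum>j. xs (Suc j) m - xs j m)"
      by (rule summable_LIMSEQ[OF sm])
    then have "(\<lambda>n. xs 0 m + (\<Sum>j<n. xs (Suc j) m - xs j m)) \<longlonglongrightarrow> x m"
      unfolding x_def by (intro tendsto_add tendsto_const)
    moreover have "xs 0 m + (\<Sum>j<n. xs (Suc j) m - xs j m) = xs n m" for n
      using sum_lessThan_telescope[of "\<lambda>j. xs j m" n] by simp
    ultimately show ?thesis by simp
  qed
  have xdist: "\<bar>x m - xs n m\<bar> \<le> 2 * B * a ^ n" for m n
  proof -
    have c: "(\<lambda>k. xs (k + n) m) \<longlonglongrightarrow> x m" using LIMSEQ_ignore_initial_segment[OF conv[of m], of n] .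
    have "(\<lambda>k. \<bar>xs (k + n) m - xs n m\<bar>) \<longlonglongrightarrow> \<bar>x m - xs n m\<bar>"
      by (intro tendsto_rabs tendsto_diff c tendsto_const)
    moreover have "\<bar>xs (k + n) m - xs n m\<bar> \<le> 2 * B * a ^ n" for k using cauchy[of n k m] by (simp add: add.commute)
    ultimately show ?thesis by (intro LIMSEQ_le_const2) auto
  qed
  have xb: "\<bar>x m\<bar> \<le> B" for m
  proof -
    have "(\<lambda>n. \<bar>xs n m\<bar>) \<longlonglongrightarrow> \<bar>x m\<bar>" by (intro tendsto_rabs conv)
    then show ?thesis using xsb by (intro LIMSEQ_le_const2) auto
  qed
  have fx: "x m = Phi L f x m" for m
  proof -
    have "\<bar>x m - Phi L f x m\<bar> \<le> (4 * B) * a ^ n" for n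
    proof -
      have c1: "\<bar>Phi L f x m - Phi L f (xs n) m\<bar> \<le> a * (2 * B * a ^ n)"
        using Phi_contr[OF L xb xsb xdist] by (simp add: a_def)
      have c2: "\<bar>x m - xs (Suc n) m\<bar> \<le> 2 * B * a ^ Suc n" by (rule xdist)
      have "\<bar>x m - Phi L f x m\<bar> \<le> \<bar>x m - xs (Suc n) m\<bar> + \<bar>Phi L f x m - Phi L f (xs n) m\<bar>"
        by (simp add: xs_Suc)
      also have "\<dots> \<le> 2 * B * a ^ Suc n + a * (2 * B * a ^ n)" using c1 c2 by (intro add_mono)
      also have "\<dots> = (4 * B) * (a * a ^ n)" by (simp add: algebra_simps)
      also have "\<dots> \<le> (4 * B) * a ^ n" using a0 a1 B0 by (intro mult_left_mono mult_left_le_one_le) auto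
      finally show ?thesis .
    qed
    then have "\<bar>x m - Phi L f x m\<bar> \<le> 0" by (intro zero_by_geom[OF a0]) (use a1 in auto)
    then show ?thesis by simp
  qed
  show ?thesis using xb fx unfolding B_def by blast
qed

end


lemma norm_le_sum_vec: "norm (x :: 'a::real_normed_vector ^ 'n) \<le> (\<Sum>i\<in>UNIV. norm (x $ i))"
  unfolding norm_vec_def by (rule L2_set_le_sum) simp

lemma norm_le_sum_mat: "norm (M :: complex ^ 'n ^ 'm) \<le> (\<Sum>i\<in>UNIV. \<Sum>j\<in>UNIV. cmod (M $ i $ j))"
proof -
  have "norm M \<le> (\<Sum>i\<in>UNIV. norm (M $ i))" by (rule norm_le_sum_vec)
  also have "\<dots> \<le> (\<Sum>i\<in>UNIV. \<Sum>j\<in>UNIV. cmod (M $ i $ j))" by (intro sum_mono norm_le_sum_vec)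
  finally show ?thesis .
qed

lemma mat1_entry: "(mat 1 :: 'a::zero_neq_one ^'n^'n) $ i $ j = (if i = j then 1 else 0)"
  by (simp add: mat_def)

context rhs
begin

definition ff :: "real \<Rightarrow> 2 \<Rightarrow> int \<Rightarrow> real" where
  "ff L i m = (if i = 1 then JJ L m else L * JJ L (m+1))"
definition gg :: "real \<Rightarrow> 2 \<Rightarrow> int \<Rightarrow> real" where
  "gg L j m = (if j = 1 then L * JJ L (m+1) else - JJ L m)"
definition XB :: real where "XB = 6 * Cc"

definition xsol :: "real \<Rightarrow> 2 \<Rightarrow> int \<Rightarrow> real" where
  "xsol L i = (SOME x. (\<forall>m. \<bar>x m\<bar> \<le> XB) \<and> (\<forall>m. x m = Phi L (ff L i) x m))"

definition rr :: "real \<Rightarrow> 2 \<Rightarrow> 2 \<Rightarrow> int \<Rightarrow> complex" where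
  "rr L i j k = complex_of_real (xsol L i k * gg L j k)"

definition Ysol :: "real \<Rightarrow> complex \<Rightarrow> complex^2^2" where
  "Ysol L z = mat 1 + (\<chi> i j. Fs (rr L i j) UNIV z)"

lemma Ysol_entry: "Ysol L z $ i $ j = (if i = j then 1 else 0) + Fs (rr L i j) UNIV z"
  unfolding Ysol_def by (simp add: mat1_entry)

lemma ff_bound: "0 \<le> L \<Longrightarrow> L \<le> 1 \<Longrightarrow> \<bar>ff L i m\<bar> \<le> 3"
proof -
  assume L: "0 \<le> L" "L \<le> 1"
  have "\<bar>L * JJ L (m+1)\<bar> \<le> 1 * 3" unfolding abs_mult using L JJ_le3[OF L] by (intro mult_mono) auto
  then show ?thesis unfolding ff_def using JJ_le3[OF L] by auto
qed

lemma xsol_prop: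
  assumes L: "0 \<le> L" "L \<le> L0"
  shows "\<bar>xsol L i m\<bar> \<le> XB" "xsol L i m = Phi L (ff L i) (xsol L i) m"
proof -
  have L1: "L \<le> 1" using L L0_le by linarith
  have "\<exists>x. (\<forall>m. \<bar>x m\<bar> \<le> 2 * Cc * 3) \<and> (\<forall>m. x m = Phi L (ff L i) x m)"
    by (rule fixpt[OF L]) (rule ff_bound[OF L(1) L1])
  then have "\<exists>x. (\<forall>m. \<bar>x m\<bar> \<le> XB) \<and> (\<forall>m. x m = Phi L (ff L i) x m)" unfolding XB_def by simp
  then have "(\<forall>m. \<bar>xsol L i m\<bar> \<le> XB) \<and> (\<forall>m. xsol L i m = Phi L (ff L i) (xsol L i) m)"
    unfolding xsol_def by (rule someI_ex)
  then show "\<bar>xsol L i m\<bar> \<le> XB" "xsol L i m = Phi L (ff L i) (xsol L i) m" by auto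
qed

lemma gg_om: "0 \<le> L \<Longrightarrow> L \<le> 1/2 \<Longrightarrow> \<bar>gg L j k\<bar> \<le> 9 * om k"
proof -
  assume L: "0 \<le> L" "L \<le> 1/2"
  have "\<bar>L * JJ L (k+1)\<bar> \<le> 1 * (6 * om k)" unfolding abs_mult using L JJ_om1[OF L] by (intro mult_mono) auto
  then show ?thesis unfolding gg_def using JJ_om[OF L, of k] om_pos[of k] by auto
qed

lemma rr_summable:
  assumes L: "0 \<le> L" "L \<le> L0"
  shows "(\<lambda>k. norm (rr L i j k)) summable_on A"
proof -
  have L2: "L \<le> 1/2" using L L0_le by linarith
  have "(\<lambda>k. xsol L i k * gg L j k) summable_on A"
  proof (rule summable_by_om[of _ "XB * 9"])
    fix k
    show "\<bar>xsol L i k * gg L j k\<bar> \<le> XB * 9 * om k"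
      unfolding abs_mult mult.assoc
      by (rule mult_mono[OF xsol_prop(1)[OF L] gg_om[OF L(1) L2]]) (use xsol_prop(1)[OF L, of i k] in auto)
  qed
  then have "(\<lambda>k. \<bar>xsol L i k * gg L j k\<bar>) summable_on A"
    using summable_on_iff_abs_summable_on_real[of "\<lambda>k. xsol L i k * gg L j k" A] by simp
  then show ?thesis unfolding rr_def norm_of_real .
qed

lemma WY_entry: "WY \<sigma> s L m $ i $ j = complex_of_real (cc L m * ff L i m * gg L j m)"
proof -
  have t: "0 \<le> tau m" using tau_01 by simp
  have f: "fvec \<sigma> s L m $ i = sqrt (tau m) * ff L i m"
    unfolding fvec_def ff_def tau_def JJ_def using exhaust_2[of i] by auto
  have g: "gvec \<sigma> s L m $ j = sqrt (tau m) * gg L j m"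
    unfolding gvec_def gg_def tau_def JJ_def using exhaust_2[of j] by auto
  have eq: "fvec \<sigma> s L m $ i * gvec \<sigma> s L m $ j / (1 - Ms \<sigma> s L m) = cc L m * ff L i m * gg L j m"
  proof -
    have st: "sqrt (tau m) * sqrt (tau m) = tau m" using t by simp
    have e1: "sqrt (tau m) * a * (sqrt (tau m) * b) = (sqrt (tau m) * sqrt (tau m)) * (a * b)" for a b
      by (simp add: mult_ac)
    show ?thesis unfolding f g cc_def e1 st by simp
  qed
  have w: "WY \<sigma> s L m $ i $ j = complex_of_real (fvec \<sigma> s L m $ i * gvec \<sigma> s L m $ j / (1 - Ms \<sigma> s L m))"
    unfolding WY_def by (simp only: vec_lambda_beta)
  show ?thesis unfolding w eq by (rule refl)
qed

end


lemma ah_eq: "complex_of_real (of_int m + 1/2) = ah m" unfolding ah_def ..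

lemma infsum_of_real_eq:
  fixes g :: "int \<Rightarrow> real"
  assumes "g summable_on A"
  shows "(\<Sum>\<^sub>\<infinity>k\<in>A. complex_of_real (g k)) = complex_of_real (\<Sum>\<^sub>\<infinity>k\<in>A. g k)"
proof -
  have "(g has_sum (\<Sum>\<^sub>\<infinity>k\<in>A. g k)) A" using assms by (rule has_sum_infsum)
  then have "((\<lambda>k. complex_of_real (g k)) has_sum complex_of_real (\<Sum>\<^sub>\<infinity>k\<in>A. g k)) A"
    by (rule has_sum_bounded_linear[OF bounded_linear_of_real])
  then show ?thesis by (rule infsumI)
qed

lemma Fs_lin2:
  assumes "0 < e" "\<And>k. k \<in> I \<Longrightarrow> e \<le> cmod (z - ah k)"
    and "(\<lambda>k. norm (r1 k)) summable_on UNIV" "(\<lambda>k. norm (r2 k)) summable_on UNIV"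
  shows "Fs (\<lambda>k. c1 * r1 k + c2 * r2 k) I z = c1 * Fs r1 I z + c2 * Fs r2 I z"
proof -
  have s1: "(\<lambda>k. r1 k / (z - ah k)) summable_on I" by (rule Fs_summable[OF assms(3) assms(1,2)])
  have s2: "(\<lambda>k. r2 k / (z - ah k)) summable_on I" by (rule Fs_summable[OF assms(4) assms(1,2)])
  have "Fs (\<lambda>k. c1 * r1 k + c2 * r2 k) I z = (\<Sum>\<^sub>\<infinity>k\<in>I. c1 * (r1 k / (z - ah k)) + c2 * (r2 k / (z - ah k)))"
    unfolding Fs_def by (rule infsum_cong) (simp add: add_divide_distrib)
  also have "\<dots> = (\<Sum>\<^sub>\<infinity>k\<in>I. c1 * (r1 k / (z - ah k))) + (\<Sum>\<^sub>\<infinity>k\<in>I. c2 * (r2 k / (z - ah k)))"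
    by (rule infsum_add) (intro summable_on_cmult_right s1 s2)+
  also have "\<dots> = c1 * Fs r1 I z + c2 * Fs r2 I z"
  proof -
    have a: "(\<Sum>\<^sub>\<infinity>k\<in>I. c1 * (r1 k / (z - ah k))) = c1 * Fs r1 I z"
      unfolding Fs_def by (rule infsum_cmult_right) (rule s1)
    have b: "(\<Sum>\<^sub>\<infinity>k\<in>I. c2 * (r2 k / (z - ah k))) = c2 * Fs r2 I z"
      unfolding Fs_def by (rule infsum_cmult_right) (rule s2)
    show ?thesis unfolding a b ..
  qed
  finally show ?thesis .
qed

context rhs
begin

lemma Y_holo:
  assumes L: "0 \<le> L" "L \<le> L0"
  shows "(\<lambda>z. Ysol L z $ i $ j) holomorphic_on (- halfintC)"
  unfolding Ysol_entry
  by (intro holomorphic_intros Fs_holo_off rr_summable[OF L])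

lemma Y_pole:
  assumes L: "0 \<le> L" "L \<le> L0"
  shows "\<exists>c. ((\<lambda>z. (z - ah m) * Ysol L z $ i $ j) \<longlongrightarrow> c) (at (ah m))"
proof -
  have "((\<lambda>z. (z - ah m) * (if i = j then 1 else 0) + (z - ah m) * Fs (rr L i j) UNIV z)
      \<longlongrightarrow> (ah m - ah m) * (if i = j then 1 else 0) + rr L i j m) (at (ah m))"
    by (intro tendsto_add tendsto_mult tendsto_diff tendsto_ident_at tendsto_const Fs_pole rr_summable[OF L])
  then show ?thesis unfolding Ysol_entry distrib_left by blast
qed

lemma Y_norm:
  assumes L: "0 \<le> L" "L \<le> L0"
  shows "\<forall>\<epsilon>>0. \<exists>N::nat. \<forall>n\<ge>N. \<forall>z. cmod z = real n \<longrightarrow> norm (Ysol L z - mat 1) \<le> \<epsilon>"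
proof (intro allI impI)
  fix \<epsilon> :: real assume e: "0 < \<epsilon>"
  have ex: "\<exists>N. \<forall>n\<ge>N. \<forall>z. cmod z = real n \<longrightarrow> cmod (Fs (rr L i j) UNIV z) \<le> \<epsilon>/4" for i j
    by (rule Fs_circle[OF rr_summable[OF L]]) (use e in simp)
  obtain N11 where N11: "\<forall>n\<ge>N11. \<forall>z. cmod z = real n \<longrightarrow> cmod (Fs (rr L 1 1) UNIV z) \<le> \<epsilon>/4"
    using ex[of 1 1] by blast
  obtain N12 where N12: "\<forall>n\<ge>N12. \<forall>z. cmod z = real n \<longrightarrow> cmod (Fs (rr L 1 2) UNIV z) \<le> \<epsilon>/4"
    using ex[of 1 2] by blast
  obtain N21 where N21: "\<forall>n\<ge>N21. \<forall>z. cmod z = real n \<longrightarrow> cmod (Fs (rr L 2 1) UNIV z) \<le> \<epsilon>/4"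
    using ex[of 2 1] by blast
  obtain N22 where N22: "\<forall>n\<ge>N22. \<forall>z. cmod z = real n \<longrightarrow> cmod (Fs (rr L 2 2) UNIV z) \<le> \<epsilon>/4"
    using ex[of 2 2] by blast
  show "\<exists>N::nat. \<forall>n\<ge>N. \<forall>z. cmod z = real n \<longrightarrow> norm (Ysol L z - mat 1) \<le> \<epsilon>"
  proof (rule exI[of _ "N11 + N12 + N21 + N22"], intro allI impI)
    fix n z assume n: "N11 + N12 + N21 + N22 \<le> n" and z: "cmod z = real n"
    have "norm (Ysol L z - mat 1) \<le> (\<Sum>i\<in>UNIV. \<Sum>j\<in>UNIV. cmod ((Ysol L z - mat 1) $ i $ j))"
      by (rule norm_le_sum_mat)
    also have "\<dots> = cmod (Fs (rr L 1 1) UNIV z) + cmod (Fs (rr L 1 2) UNIV z) + (cmod (Fs (rr L 2 1) UNIV z) + cmod (Fs (rr L 2 2) UNIV z))"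
      by (simp add: sum_2 Ysol_entry mat1_entry)
    also have "\<dots> \<le> \<epsilon>/4 + \<epsilon>/4 + (\<epsilon>/4 + \<epsilon>/4)"
    proof -
      have le: "N11 \<le> n" "N12 \<le> n" "N21 \<le> n" "N22 \<le> n" using n by linarith+
      show ?thesis
        by (intro add_mono N11[rule_format, OF le(1) z] N12[rule_format, OF le(2) z]
            N21[rule_format, OF le(3) z] N22[rule_format, OF le(4) z])
    qed
    finally show "norm (Ysol L z - mat 1) \<le> \<epsilon>" by simp
  qed
qed

end


context rhs
begin

definition Gd :: "real \<Rightarrow> int \<Rightarrow> int \<Rightarrow> real" where
  "Gd L m k = gg L 1 k * ff L 1 m + gg L 2 k * ff L 2 m"

definition rp :: "real \<Rightarrow> int \<Rightarrow> 2 \<Rightarrow> int \<Rightarrow> complex" where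
  "rp L m i k = complex_of_real (xsol L i k * Gd L m k)"

lemma rp_lin: "rp L m i k = complex_of_real (ff L 1 m) * rr L i 1 k + complex_of_real (ff L 2 m) * rr L i 2 k"
  unfolding rp_def rr_def Gd_def by (simp add: algebra_simps)

lemma rp_m: "rp L m i m = 0"
  unfolding rp_def Gd_def gg_def ff_def by (simp add: algebra_simps)

lemma rp_summable:
  assumes L: "0 \<le> L" "L \<le> L0"
  shows "(\<lambda>k. norm (rp L m i k)) summable_on UNIV"
proof -
  have s: "(\<lambda>k. \<bar>ff L 1 m\<bar> * norm (rr L i 1 k) + \<bar>ff L 2 m\<bar> * norm (rr L i 2 k)) summable_on UNIV"
    by (intro summable_on_add summable_on_cmult_right rr_summable[OF L])
  show ?thesis
  proof (rule summable_on_comparison_test[OF s])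
    fix k
    show "norm (rp L m i k) \<le> \<bar>ff L 1 m\<bar> * norm (rr L i 1 k) + \<bar>ff L 2 m\<bar> * norm (rr L i 2 k)"
      unfolding rp_lin using norm_triangle_ineq[of "complex_of_real (ff L 1 m) * rr L i 1 k" "complex_of_real (ff L 2 m) * rr L i 2 k"]
      by (simp add: norm_mult)
  qed simp
qed

lemma Aco_Gd: "k \<noteq> m \<Longrightarrow> Aco L m k * x = x * Gd L m k / of_int (m - k)"
  unfolding Aco_def Gd_def gg_def ff_def by (simp add: algebra_simps)

lemma sumA:
  assumes L: "0 \<le> L" "L \<le> L0"
  shows "(\<Sum>\<^sub>\<infinity>k. Aco L m k * xsol L i k) = (\<Sum>\<^sub>\<infinity>k\<in>-{m}. xsol L i k * Gd L m k / of_int (m - k))"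
    and "(\<lambda>k. xsol L i k * Gd L m k / of_int (m - k)) summable_on -{m}"
proof -
  have L2: "L \<le> 1/2" using L L0_le by linarith
  have s: "(\<lambda>k. Aco L m k * xsol L i k) summable_on -{m}"
    by (rule Asum(1)[OF L(1) L2]) (rule xsol_prop(1)[OF L])
  have "UNIV = insert m (-{m})" by auto
  then have "(\<Sum>\<^sub>\<infinity>k. Aco L m k * xsol L i k) = (\<Sum>\<^sub>\<infinity>k\<in>insert m (-{m}). Aco L m k * xsol L i k)" by simp
  also have "\<dots> = Aco L m m * xsol L i m + (\<Sum>\<^sub>\<infinity>k\<in>-{m}. Aco L m k * xsol L i k)"
    by (rule infsum_insert[OF s]) simp
  also have "\<dots> = (\<Sum>\<^sub>\<infinity>k\<in>-{m}. Aco L m k * xsol L i k)" by (simp add: Aco_def)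
  also have "\<dots> = (\<Sum>\<^sub>\<infinity>k\<in>-{m}. xsol L i k * Gd L m k / of_int (m - k))"
    by (rule infsum_cong) (simp add: Aco_Gd)
  finally show "(\<Sum>\<^sub>\<infinity>k. Aco L m k * xsol L i k) = (\<Sum>\<^sub>\<infinity>k\<in>-{m}. xsol L i k * Gd L m k / of_int (m - k))" .
  show "(\<lambda>k. xsol L i k * Gd L m k / of_int (m - k)) summable_on -{m}"
    using s by (rule summable_on_cong[THEN iffD1, rotated]) (simp add: Aco_Gd)
qed

definition Phz :: "real \<Rightarrow> int \<Rightarrow> 2 \<Rightarrow> complex \<Rightarrow> complex" where
  "Phz L m i z = complex_of_real (ff L i m) + Fs (rp L m i) (-{m}) z"

lemma Fs_rp_at:
  assumes L: "0 \<le> L" "L \<le> L0"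
  shows "Fs (rp L m i) (-{m}) (ah m) = complex_of_real (\<Sum>\<^sub>\<infinity>k\<in>-{m}. xsol L i k * Gd L m k / of_int (m - k))"
proof -
  have "Fs (rp L m i) (-{m}) (ah m) = (\<Sum>\<^sub>\<infinity>k\<in>-{m}. complex_of_real (xsol L i k * Gd L m k / of_int (m - k)))"
    unfolding Fs_def by (rule infsum_cong) (simp add: rp_def ah_diff)
  also have "\<dots> = complex_of_real (\<Sum>\<^sub>\<infinity>k\<in>-{m}. xsol L i k * Gd L m k / of_int (m - k))"
    by (rule infsum_of_real_eq[OF sumA(2)[OF L]])
  finally show ?thesis .
qed

lemma rr_m:
  assumes L: "0 \<le> L" "L \<le> L0"
  shows "rr L i j m = complex_of_real (cc L m * gg L j m) * Phz L m i (ah m)"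
proof -
  have "xsol L i m = cc L m * (ff L i m + (\<Sum>\<^sub>\<infinity>k\<in>-{m}. xsol L i k * Gd L m k / of_int (m - k)))"
    using xsol_prop(2)[OF L, of i m] sumA(1)[OF L] unfolding Phi_def by simp
  then show ?thesis unfolding rr_def Phz_def Fs_rp_at[OF L] by (simp add: algebra_simps)
qed

lemma sum_Y_ff:
  assumes L: "0 \<le> L" "L \<le> L0" and z: "z \<in> ball (ah m) (1/2)" "z \<noteq> ah m"
  shows "(\<Sum>l\<in>UNIV. Ysol L z $ i $ l * complex_of_real (ff L l m)) = Phz L m i z"
proof -
  have sp: "Fs (rr L i l) UNIV z = rr L i l m / (z - ah m) + Fs (rr L i l) (-{m}) z" for l
    by (rule Fs_split[OF rr_summable[OF L] z(1)])
  have lin: "Fs (rp L m i) (-{m}) z = complex_of_real (ff L 1 m) * Fs (rr L i 1) (-{m}) z + complex_of_real (ff L 2 m) * Fs (rr L i 2) (-{m}) z"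
  proof -
    have "Fs (rp L m i) (-{m}) z = Fs (\<lambda>k. complex_of_real (ff L 1 m) * rr L i 1 k + complex_of_real (ff L 2 m) * rr L i 2 k) (-{m}) z"
      unfolding rp_lin ..
    also have "\<dots> = complex_of_real (ff L 1 m) * Fs (rr L i 1) (-{m}) z + complex_of_real (ff L 2 m) * Fs (rr L i 2) (-{m}) z"
      by (rule Fs_lin2[of "1/2"]) (use near_sep z(1) rr_summable[OF L] in auto)
    finally show ?thesis .
  qed
  have r0: "complex_of_real (ff L 1 m) * rr L i 1 m + complex_of_real (ff L 2 m) * rr L i 2 m = 0"
    using rp_m[of L m i] unfolding rp_lin .
  have w: "z - ah m \<noteq> 0" using z(2) by simp
  have "(\<Sum>l\<in>UNIV. Ysol L z $ i $ l * complex_of_real (ff L l m))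
      = complex_of_real (ff L i m)
        + (complex_of_real (ff L 1 m) * rr L i 1 m + complex_of_real (ff L 2 m) * rr L i 2 m) / (z - ah m)
        + (complex_of_real (ff L 1 m) * Fs (rr L i 1) (-{m}) z + complex_of_real (ff L 2 m) * Fs (rr L i 2) (-{m}) z)"
    using exhaust_2[of i] by (auto simp: sum_2 Ysol_entry sp algebra_simps add_divide_distrib)
  also have "\<dots> = Phz L m i z" unfolding r0 lin[symmetric] Phz_def by simp
  finally show ?thesis .
qed

lemma entry_formula:
  assumes L: "0 \<le> L" "L \<le> L0" and z: "z \<in> ball (ah m) (1/2)" "z \<noteq> ah m"
  shows "(Ysol L z ** (mat 1 - (\<chi> i j. WY \<sigma> s L m $ i $ j / (z - ah m)))) $ i $ j
     = (if i = j then 1 else 0) + Fs (rr L i j) (-{m}) z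
       - complex_of_real (cc L m * gg L j m) * ((Phz L m i z - Phz L m i (ah m)) / (z - ah m))"
proof -
  have w: "z - ah m \<noteq> 0" using z(2) by simp
  have "(Ysol L z ** (mat 1 - (\<chi> i j. WY \<sigma> s L m $ i $ j / (z - ah m)))) $ i $ j
      = (\<Sum>l\<in>UNIV. Ysol L z $ i $ l * ((if l = j then 1 else 0) - complex_of_real (cc L m * ff L l m * gg L j m) / (z - ah m)))"
    by (simp add: matrix_matrix_mult_def mat1_entry WY_entry)
  also have "\<dots> = (\<Sum>l\<in>UNIV. Ysol L z $ i $ l * (if l = j then 1 else 0))
      - complex_of_real (cc L m * gg L j m) / (z - ah m) * (\<Sum>l\<in>UNIV. Ysol L z $ i $ l * complex_of_real (ff L l m))"
    by (simp add: right_diff_distrib sum_subtractf sum_distrib_left algebra_simps)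
  also have "(\<Sum>l\<in>UNIV. Ysol L z $ i $ l * (if l = j then 1 else 0)) = Ysol L z $ i $ j"
    by (simp add: if_distrib cong: if_cong)
  also have "(\<Sum>l\<in>UNIV. Ysol L z $ i $ l * complex_of_real (ff L l m)) = Phz L m i z"
    by (rule sum_Y_ff[OF L z])
  also have "Ysol L z $ i $ j = (if i = j then 1 else 0) + rr L i j m / (z - ah m) + Fs (rr L i j) (-{m}) z"
    unfolding Ysol_entry Fs_split[OF rr_summable[OF L] z(1)] by simp
  also have "rr L i j m = complex_of_real (cc L m * gg L j m) * Phz L m i (ah m)" by (rule rr_m[OF L])
  finally show ?thesis using w by (simp add: field_simps)
qed

lemma Y_jump:
  assumes L: "0 \<le> L" "L \<le> L0"
  shows "\<exists>R. ((\<lambda>z. Ysol L z ** (mat 1 - (\<chi> i j. WY \<sigma> s L m $ i $ j / (z - ah m)))) \<longlongrightarrow> R) (at (ah m))"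
proof -
  have "\<exists>l. ((\<lambda>z. (Ysol L z ** (mat 1 - (\<chi> i j. WY \<sigma> s L m $ i $ j / (z - ah m)))) $ i $ j) \<longlongrightarrow> l) (at (ah m))" for i j
  proof -
    have "Fs (rp L m i) (-{m}) field_differentiable (at (ah m))"
      using holomorphic_on_imp_differentiable_at[OF Fs_rest_holo[OF rp_summable[OF L]]] by auto
    then obtain D where D: "(Fs (rp L m i) (-{m}) has_field_derivative D) (at (ah m))"
      by (auto simp: field_differentiable_def)
    then have "(Phz L m i has_field_derivative D) (at (ah m))"
      unfolding Phz_def by (auto intro!: derivative_eq_intros)
    then have dq: "((\<lambda>z. (Phz L m i z - Phz L m i (ah m)) / (z - ah m)) \<longlongrightarrow> D) (at (ah m))"
      by (simp add: has_field_derivative_iff)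
    have ct: "(Fs (rr L i j) (-{m}) \<longlongrightarrow> Fs (rr L i j) (-{m}) (ah m)) (at (ah m))"
      using Fs_rest_cont[OF rr_summable[OF L]] isCont_def by blast
    have lim: "((\<lambda>z. (if i = j then 1 else 0) + Fs (rr L i j) (-{m}) z
       - complex_of_real (cc L m * gg L j m) * ((Phz L m i z - Phz L m i (ah m)) / (z - ah m)))
       \<longlongrightarrow> (if i = j then 1 else 0) + Fs (rr L i j) (-{m}) (ah m) - complex_of_real (cc L m * gg L j m) * D) (at (ah m))"
      by (intro tendsto_intros ct dq)
    have ev: "\<forall>\<^sub>F z in at (ah m). (if i = j then 1 else 0) + Fs (rr L i j) (-{m}) z
       - complex_of_real (cc L m * gg L j m) * ((Phz L m i z - Phz L m i (ah m)) / (z - ah m))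
       = (Ysol L z ** (mat 1 - (\<chi> i j. WY \<sigma> s L m $ i $ j / (z - ah m)))) $ i $ j"
      using eventually_at_ball'[of "1/2::real" "ah m" UNIV, OF half_gt_zero[OF zero_less_one]]
    proof (rule eventually_mono)
      fix z assume "z \<in> ball (ah m) (1/2) \<and> z \<noteq> ah m \<and> z \<in> UNIV"
      then show "(if i = j then 1 else 0) + Fs (rr L i j) (-{m}) z
       - complex_of_real (cc L m * gg L j m) * ((Phz L m i z - Phz L m i (ah m)) / (z - ah m))
       = (Ysol L z ** (mat 1 - (\<chi> i j. WY \<sigma> s L m $ i $ j / (z - ah m)))) $ i $ j"
        using entry_formula[OF L] by auto
    qed
    show ?thesis using tendsto_cong[OF ev] lim by blast
  qed
  then have "\<forall>p. \<exists>l. ((\<lambda>z. (Ysol L z ** (mat 1 - (\<chi> i j. WY \<sigma> s L m $ i $ j / (z - ah m)))) $ fst p $ snd p) \<longlongrightarrow> l) (at (ah m))"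
    by blast
  from choice[OF this] obtain f where f: "\<forall>p. ((\<lambda>z. (Ysol L z ** (mat 1 - (\<chi> i j. WY \<sigma> s L m $ i $ j / (z - ah m)))) $ fst p $ snd p) \<longlongrightarrow> f p) (at (ah m))"
    by blast
  define l where "l i j = f (i, j)" for i j
  have l: "((\<lambda>z. (Ysol L z ** (mat 1 - (\<chi> i j. WY \<sigma> s L m $ i $ j / (z - ah m)))) $ i $ j) \<longlongrightarrow> l i j) (at (ah m))" for i j
    using f[rule_format, of "(i, j)"] unfolding l_def by simp
  have "((\<lambda>z. Ysol L z ** (mat 1 - (\<chi> i j. WY \<sigma> s L m $ i $ j / (z - ah m)))) \<longlongrightarrow> (\<chi> i j. l i j)) (at (ah m))"
  proof (rule vec_tendstoI)
    fix i
    show "((\<lambda>z. (Ysol L z ** (mat 1 - (\<chi> i j. WY \<sigma> s L m $ i $ j / (z - ah m)))) $ i) \<longlongrightarrow> (\<chi> i j. l i j) $ i) (at (ah m))"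
      by (rule vec_tendstoI) (simp add: l)
  qed
  then show ?thesis by blast
qed

lemma RH_ok:
  assumes L: "0 \<le> L" "L \<le> L0"
  shows "RH_solution \<sigma> s L (Ysol L)"
  unfolding RH_solution_def ah_eq
  using Y_holo[OF L] Y_pole[OF L] Y_jump[OF L] Y_norm[OF L] by blast

end


lemma Pn_JJ: "Pn 4 (\<lambda>L. JJ L n)"
  unfolding JJ_def by (rule Pn_besselJ)

lemma ev_L0: "0 < b \<Longrightarrow> \<forall>\<^sub>F L in at_right (0::real). 0 < L \<and> L \<le> b"
  unfolding eventually_at_right_field by (rule exI[of _ b]) auto

lemma KBe_split:
  assumes L: "0 \<le> L" "L \<le> 1/2" and k: "-1 \<le> k"
  shows "\<bar>KBe L k - ((JJ L (k+1))^2 + (JJ L (k+2))^2)\<bar> \<le> (144 * Wom) * L^4"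
proof -
  have s: "(\<lambda>n. (JJ L n)^2) summable_on A" for A by (rule JJsq_summable[OF L])
  have e: "{k<..} = {k+1, k+2} \<union> {k+2<..}" by auto
  have "KBe L k = (\<Sum>\<^sub>\<infinity>n\<in>{k+1, k+2}. (JJ L n)^2) + (\<Sum>\<^sub>\<infinity>n\<in>{k+2<..}. (JJ L n)^2)"
    unfolding KBe_infsum[OF L] e by (rule infsum_Un_disjoint[OF s s]) auto
  also have "(\<Sum>\<^sub>\<infinity>n\<in>{k+1, k+2}. (JJ L n)^2) = (JJ L (k+1))^2 + (JJ L (k+2))^2" by simp
  finally have eq: "KBe L k - ((JJ L (k+1))^2 + (JJ L (k+2))^2) = (\<Sum>\<^sub>\<infinity>n\<in>{k+2<..}. (JJ L n)^2)" by simp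
  define g where "g n = (if n \<in> {k+2<..} then (JJ L n)^2 else 0)" for n
  have gb: "\<bar>g n\<bar> \<le> (144 * L^4) * om n" for n
  proof (cases "n \<in> {k+2<..}")
    case True
    then have n2: "2 \<le> \<bar>n\<bar>" using k by auto
    have "\<bar>JJ L n\<bar>^2 \<le> (3 * L ^ nat \<bar>n\<bar>)^2" using JJ_bound[of L n] L by (intro power_mono) auto
    also have "\<dots> = 9 * L ^ (2 * nat \<bar>n\<bar>)" by (simp add: power_mult_distrib power_mult[symmetric] mult.commute)
    also have "\<dots> \<le> 9 * (16 * L^4 * om n)" by (intro mult_left_mono pow_tail4[OF L n2]) simp
    finally show ?thesis using True unfolding g_def by simp
  next
    case False
    then show ?thesis unfolding g_def using om_pos[of n] L by simp
  qed
  have "(\<Sum>\<^sub>\<infinity>n\<in>{k+2<..}. (JJ L n)^2) = (\<Sum>\<^sub>\<infinity>n\<in>{k+2<..}. g n)"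
    by (rule infsum_cong) (simp add: g_def)
  also have "\<bar>\<dots>\<bar> \<le> (144 * L^4) * Wom" by (rule infsum_by_om[OF gb])
  finally show ?thesis unfolding eq by (simp add: mult_ac)
qed

lemma Pn_KBe:
  assumes k: "-1 \<le> k" shows "Pn 4 (\<lambda>L. KBe L k)"
proof (rule Pn_err)
  show "Pn 4 (\<lambda>L. (JJ L (k+1))^2 + (JJ L (k+2))^2)"
    unfolding power2_eq_square by (intro Pn_add Pn_mult Pn_JJ)
  have "\<forall>\<^sub>F L in at_right 0. \<bar>KBe L k - ((JJ L (k+1))^2 + (JJ L (k+2))^2)\<bar> \<le> (144 * Wom) * L^4"
    using ev_L0[of "1/2::real", OF half_gt_zero[OF zero_less_one]]
  proof (rule eventually_mono)
    fix L :: real assume "0 < L \<and> L \<le> 1/2"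
    then show "\<bar>KBe L k - ((JJ L (k+1))^2 + (JJ L (k+2))^2)\<bar> \<le> (144 * Wom) * L^4"
      using KBe_split[OF _ _ k, of L] by auto
  qed
  then show "On 4 (\<lambda>L. KBe L k - ((JJ L (k+1))^2 + (JJ L (k+2))^2))" by (rule On_bound)
qed

context rhs
begin

lemma Pn_cc: assumes k: "-1 \<le> k" shows "Pn 4 (\<lambda>L. cc L k)"
proof -
  have "Pn 4 (\<lambda>L. 1 / (1 - Ms \<sigma> s L k))"
  proof (rule Pn_inverse[OF _ dl_pos])
    show "Pn 4 (\<lambda>L. 1 - Ms \<sigma> s L k)" unfolding Ms_eq by (intro Pn_diff Pn_const Pn_cmult Pn_KBe k)
    show "\<forall>\<^sub>F L in at_right 0. dl \<le> \<bar>1 - Ms \<sigma> s L k\<bar>"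
      using ev_L0[OF L0_pos]
    proof (rule eventually_mono)
      fix L :: real assume "0 < L \<and> L \<le> L0"
      then have "dl \<le> 1 - Ms \<sigma> s L k" by (intro den_bound) auto
      then show "dl \<le> \<bar>1 - Ms \<sigma> s L k\<bar>" by linarith
    qed
  qed
  then have "Pn 4 (\<lambda>L. tau k * (1 / (1 - Ms \<sigma> s L k)))" by (rule Pn_cmult)
  then show ?thesis unfolding cc_def by simp
qed

definition Atil :: "real \<Rightarrow> int \<Rightarrow> int \<Rightarrow> real" where
  "Atil L m k = (if k = m then 0 else (JJ L (k+1) * JJ L m - JJ L k * JJ L (m+1)) / of_int (m - k))"

lemma Aco_Atil: "Aco L m k = L * Atil L m k"
  unfolding Aco_def Atil_def by simp

lemma Pn_Atil: "Pn 4 (\<lambda>L. Atil L m k)"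
proof (cases "k = m")
  case True then show ?thesis unfolding Atil_def using Pn_const[of 4 0] by simp
next
  case False
  have "Pn 4 (\<lambda>L. (1 / of_int (m - k)) * (JJ L (k+1) * JJ L m - JJ L k * JJ L (m+1)))"
    by (intro Pn_cmult Pn_diff Pn_mult Pn_JJ)
  then show ?thesis unfolding Atil_def using False by simp
qed

lemma Pn_ff: "Pn 4 (\<lambda>L. ff L i m)"
proof -
  have "Pn 4 (\<lambda>L. L * JJ L (m+1))" by (intro Pn_mult Pn_JJ) (rule Pn_poly[of 4 "[:0,1:]", simplified])
  then show ?thesis unfolding ff_def using Pn_JJ by (cases "i = 1") auto
qed

lemma Pn_gg: "Pn 4 (\<lambda>L. gg L j m)"
proof -
  have "Pn 4 (\<lambda>L. L * JJ L (m+1))" by (intro Pn_mult Pn_JJ) (rule Pn_poly[of 4 "[:0,1:]", simplified])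
  then show ?thesis unfolding gg_def using Pn_neg[OF Pn_JJ] by (cases "j = 1") auto
qed

definition Dx :: real where "Dx = Cc * (6 + 36 * XB * Wom)"

lemma xsol_decay:
  assumes L: "0 \<le> L" "L \<le> L0"
  shows "\<bar>xsol L i m\<bar> \<le> Dx * L ^ nat \<bar>m\<bar>"
proof -
  have L2: "L \<le> 1/2" using L L0_le by linarith
  have L1: "L \<le> 1" using L2 by linarith
  define Q where "Q = \<bar>JJ L m\<bar> + \<bar>JJ L (m+1)\<bar>"
  have b: "\<bar>Aco L m k * xsol L i k\<bar> \<le> (6 * L * Q * XB) * om k" for k
  proof -
    have "\<bar>Aco L m k * xsol L i k\<bar> = \<bar>Aco L m k\<bar> * \<bar>xsol L i k\<bar>" by (simp add: abs_mult)
    also have "\<dots> \<le> ((6 * L * Q) * om k) * XB"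
      unfolding Q_def by (rule mult_mono[OF Aco_decay[OF L(1) L2] xsol_prop(1)[OF L]]) (use L om_pos[of k] in auto)
    finally show ?thesis by (simp add: mult_ac)
  qed
  have sb: "\<bar>\<Sum>\<^sub>\<infinity>k. Aco L m k * xsol L i k\<bar> \<le> (6 * L * Q * XB) * Wom" by (rule infsum_by_om[OF b])
  have ffb: "\<bar>ff L i m\<bar> \<le> 6 * L ^ nat \<bar>m\<bar>"
  proof -
    have "\<bar>JJ L m\<bar> \<le> 3 * L ^ nat \<bar>m\<bar>" by (rule JJ_bound[OF L(1) L1])
    moreover have "\<bar>L * JJ L (m+1)\<bar> \<le> 3 * L ^ nat \<bar>m\<bar>" using LJJ_shift[OF L(1) L1, of m] L by (simp add: abs_mult)
    moreover have "0 \<le> L ^ nat \<bar>m\<bar>" using L by simp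
    ultimately show ?thesis unfolding ff_def by auto
  qed
  have LQ: "L * Q \<le> 6 * L ^ nat \<bar>m\<bar>"
  proof -
    have "L * \<bar>JJ L m\<bar> \<le> 1 * \<bar>JJ L m\<bar>" using L1 by (intro mult_right_mono) auto
    then have "L * \<bar>JJ L m\<bar> \<le> 3 * L ^ nat \<bar>m\<bar>" using JJ_bound[OF L(1) L1, of m] by linarith
    moreover have "L * \<bar>JJ L (m+1)\<bar> \<le> 3 * L ^ nat \<bar>m\<bar>" by (rule LJJ_shift[OF L(1) L1])
    ultimately show ?thesis unfolding Q_def by (simp add: distrib_left)
  qed
  have XB0: "0 \<le> XB" unfolding XB_def using Cc_pos by simp
  have "\<bar>xsol L i m\<bar> = \<bar>cc L m\<bar> * \<bar>ff L i m + (\<Sum>\<^sub>\<infinity>k. Aco L m k * xsol L i k)\<bar>"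
    using xsol_prop(2)[OF L, of i m] unfolding Phi_def by (simp add: abs_mult)
  also have "\<dots> \<le> Cc * (6 * L ^ nat \<bar>m\<bar> + (6 * L * Q * XB) * Wom)"
    using cc_bound[OF L, of m] ffb sb by (intro mult_mono) (auto intro: order.trans[OF abs_triangle_ineq add_mono])
  finally have t1: "\<bar>xsol L i m\<bar> \<le> Cc * (6 * L ^ nat \<bar>m\<bar> + (6 * L * Q * XB) * Wom)" .
  have "(6 * L * Q * XB) * Wom = 6 * XB * Wom * (L * Q)" by (simp add: mult_ac)
  also have "\<dots> \<le> 6 * XB * Wom * (6 * L ^ nat \<bar>m\<bar>)"
    using LQ XB0 Wom_pos by (intro mult_left_mono) auto
  finally have t2: "(6 * L * Q * XB) * Wom \<le> 6 * XB * Wom * (6 * L ^ nat \<bar>m\<bar>)" .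
  have "Cc * (6 * L ^ nat \<bar>m\<bar> + (6 * L * Q * XB) * Wom) \<le> Cc * (6 * L ^ nat \<bar>m\<bar> + 6 * XB * Wom * (6 * L ^ nat \<bar>m\<bar>))"
    using t2 Cc_pos by (intro mult_left_mono) auto
  also have "\<dots> = Dx * L ^ nat \<bar>m\<bar>" unfolding Dx_def by (simp add: algebra_simps)
  finally show ?thesis using t1 by linarith
qed

end


definition Kset :: "int set" where "Kset = {-1, 0, 1}"

lemma Kset_finite: "finite Kset" unfolding Kset_def by simp

lemma notK: "k \<notin> Kset \<Longrightarrow> 2 \<le> \<bar>k\<bar>" unfolding Kset_def by auto

lemma inK: "k \<in> Kset \<Longrightarrow> -1 \<le> k" unfolding Kset_def by auto

lemma pow_sq: "(L::real) ^ n * L ^ n = L ^ (2 * n)"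
  by (simp add: power_add[symmetric] mult_2)

context rhs
begin

lemma Dx_nonneg: "0 \<le> Dx"
  unfolding Dx_def XB_def using Cc_pos Wom_pos by simp

lemma E_bound:
  assumes L: "0 \<le> L" "L \<le> L0"
  shows "\<bar>\<Sum>\<^sub>\<infinity>j\<in>-Kset. Aco L k j * xsol L i j\<bar> \<le> (288 * Dx * L^4) * Wom"
proof -
  have L2: "L \<le> 1/2" using L L0_le by linarith
  define g where "g j = (if j \<in> Kset then 0 else Aco L k j * xsol L i j)" for j
  have gb: "\<bar>g j\<bar> \<le> (288 * Dx * L^4) * om j" for j
  proof (cases "j \<in> Kset")
    case True then show ?thesis unfolding g_def using om_pos[of j] Dx_nonneg L by simp
  next
    case False
    have "\<bar>Aco L k j * xsol L i j\<bar> = \<bar>Aco L k j\<bar> * \<bar>xsol L i j\<bar>" by (simp add: abs_mult)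
    also have "\<dots> \<le> (18 * L ^ nat \<bar>j\<bar>) * (Dx * L ^ nat \<bar>j\<bar>)"
      by (rule mult_mono[OF Aco_tail[OF L(1) L2] xsol_decay[OF L]]) (use L in auto)
    also have "\<dots> = 18 * Dx * (L ^ nat \<bar>j\<bar> * L ^ nat \<bar>j\<bar>)" by (simp add: mult_ac)
    also have "\<dots> = 18 * Dx * L ^ (2 * nat \<bar>j\<bar>)" by (simp only: pow_sq)
    also have "\<dots> \<le> 18 * Dx * (16 * L^4 * om j)"
      by (intro mult_left_mono pow_tail4[OF L(1) L2 notK[OF False]]) (use Dx_nonneg in auto)
    finally show ?thesis using False unfolding g_def by (simp add: mult_ac)
  qed
  have "(\<Sum>\<^sub>\<infinity>j\<in>-Kset. Aco L k j * xsol L i j) = (\<Sum>\<^sub>\<infinity>j\<in>-Kset. g j)"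
    by (rule infsum_cong) (simp add: g_def)
  also have "\<bar>\<dots>\<bar> \<le> (288 * Dx * L^4) * Wom" by (rule infsum_by_om[OF gb])
  finally show ?thesis .
qed

lemma sys_eq:
  assumes L: "0 \<le> L" "L \<le> L0"
  shows "xsol L i k = cc L k * ff L i k + cc L k * (L * (\<Sum>j\<in>Kset. Atil L k j * xsol L i j))
            + cc L k * (\<Sum>\<^sub>\<infinity>j\<in>-Kset. Aco L k j * xsol L i j)"
proof -
  have L2: "L \<le> 1/2" using L L0_le by linarith
  have s: "(\<lambda>j. Aco L k j * xsol L i j) summable_on A" for A
    by (rule Asum(1)[OF L(1) L2]) (rule xsol_prop(1)[OF L])
  have "(\<Sum>\<^sub>\<infinity>j. Aco L k j * xsol L i j) = (\<Sum>\<^sub>\<infinity>j\<in>Kset \<union> -Kset. Aco L k j * xsol L i j)" by simp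
  also have "\<dots> = (\<Sum>\<^sub>\<infinity>j\<in>Kset. Aco L k j * xsol L i j) + (\<Sum>\<^sub>\<infinity>j\<in>-Kset. Aco L k j * xsol L i j)"
    by (rule infsum_Un_disjoint[OF s s]) auto
  also have "(\<Sum>\<^sub>\<infinity>j\<in>Kset. Aco L k j * xsol L i j) = L * (\<Sum>j\<in>Kset. Atil L k j * xsol L i j)"
    using Kset_finite by (simp add: Aco_Atil sum_distrib_left mult_ac)
  finally show ?thesis using xsol_prop(2)[OF L, of i k] unfolding Phi_def by (simp add: algebra_simps)
qed

lemma Pn_xsol_all: "n \<le> 4 \<Longrightarrow> k \<in> Kset \<Longrightarrow> Pn n (\<lambda>L. xsol L i k)"
proof (induction n arbitrary: k)
  case 0
  have "\<forall>\<^sub>F L in at_right 0. \<bar>xsol L i k\<bar> \<le> XB"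
    using ev_L0[OF L0_pos] by (rule eventually_mono) (intro xsol_prop(1), auto)
  then show ?case unfolding Pn_0_iff by blast
next
  case (Suc n)
  have kk: "-1 \<le> k" using inK[OF Suc.prems(2)] .
  have IH: "Pn n (\<lambda>L. xsol L i j)" if "j \<in> Kset" for j using Suc.IH[OF _ that] Suc.prems(1) by simp
  have t1: "Pn (Suc n) (\<lambda>L. cc L k * ff L i k)"
    by (rule Pn_mono[OF _ Suc.prems(1)]) (intro Pn_mult Pn_cc kk Pn_ff)
  have "Pn n (\<lambda>L. \<Sum>j\<in>Kset. Atil L k j * xsol L i j)"
    by (intro Pn_sum Kset_finite Pn_mult Pn_mono[OF Pn_Atil] IH) (use Suc.prems in auto)
  then have "Pn (Suc n) (\<lambda>L. L * (\<Sum>j\<in>Kset. Atil L k j * xsol L i j))" by (rule Pn_Lmult)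
  then have t2: "Pn (Suc n) (\<lambda>L. cc L k * (L * (\<Sum>j\<in>Kset. Atil L k j * xsol L i j)))"
    by (rule Pn_mult[OF Pn_mono[OF Pn_cc[OF kk] Suc.prems(1)]])
  have "\<forall>\<^sub>F L in at_right 0. \<bar>cc L k * (\<Sum>\<^sub>\<infinity>j\<in>-Kset. Aco L k j * xsol L i j)\<bar> \<le> (Cc * (288 * Dx * Wom)) * L^4"
    using ev_L0[OF L0_pos]
  proof (rule eventually_mono)
    fix L :: real assume "0 < L \<and> L \<le> L0"
    then have L: "0 \<le> L" "L \<le> L0" by auto
    have "\<bar>cc L k * (\<Sum>\<^sub>\<infinity>j\<in>-Kset. Aco L k j * xsol L i j)\<bar> \<le> Cc * ((288 * Dx * L^4) * Wom)"
      unfolding abs_mult by (rule mult_mono) (use cc_bound[OF L, of k] E_bound[OF L, of k i] in auto)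
    then show "\<bar>cc L k * (\<Sum>\<^sub>\<infinity>j\<in>-Kset. Aco L k j * xsol L i j)\<bar> \<le> (Cc * (288 * Dx * Wom)) * L^4"
      by (simp add: mult_ac)
  qed
  then have "On 4 (\<lambda>L. cc L k * (\<Sum>\<^sub>\<infinity>j\<in>-Kset. Aco L k j * xsol L i j))" by (rule On_bound)
  then have t3: "Pn (Suc n) (\<lambda>L. cc L k * (\<Sum>\<^sub>\<infinity>j\<in>-Kset. Aco L k j * xsol L i j))"
    by (intro Pn_On On_mono[OF _ Suc.prems(1)])
  have "Pn (Suc n) (\<lambda>L. cc L k * ff L i k + cc L k * (L * (\<Sum>j\<in>Kset. Atil L k j * xsol L i j))
            + cc L k * (\<Sum>\<^sub>\<infinity>j\<in>-Kset. Aco L k j * xsol L i j))"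
    by (intro Pn_add t1 t2 t3)
  moreover have "\<forall>\<^sub>F L in at_right 0. cc L k * ff L i k + cc L k * (L * (\<Sum>j\<in>Kset. Atil L k j * xsol L i j))
            + cc L k * (\<Sum>\<^sub>\<infinity>j\<in>-Kset. Aco L k j * xsol L i j) = xsol L i k"
    using ev_L0[OF L0_pos] by (rule eventually_mono) (intro sys_eq[symmetric], auto)
  ultimately show ?case by (rule Pn_ev_cong)
qed

lemma Pn_coef: "k \<in> Kset \<Longrightarrow> Pn 4 (\<lambda>L. xsol L i k * gg L j k)"
  by (intro Pn_mult Pn_xsol_all Pn_gg) auto

lemma Ytail:
  assumes L: "0 \<le> L" "L \<le> L0"
  shows "(\<Sum>\<^sub>\<infinity>k\<in>-Kset. norm (rr L i j k)) \<le> (96 * Dx * L^4) * Wom"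
proof -
  have L2: "L \<le> 1/2" using L L0_le by linarith
  have L1: "L \<le> 1" using L2 by linarith
  define g where "g k = (if k \<in> Kset then 0 else norm (rr L i j k))" for k
  have gb: "\<bar>g k\<bar> \<le> (96 * Dx * L^4) * om k" for k
  proof (cases "k \<in> Kset")
    case True then show ?thesis unfolding g_def using om_pos[of k] Dx_nonneg L by simp
  next
    case False
    have ggb: "\<bar>gg L j k\<bar> \<le> 6 * L ^ nat \<bar>k\<bar>"
    proof -
      have "\<bar>JJ L k\<bar> \<le> 3 * L ^ nat \<bar>k\<bar>" by (rule JJ_bound[OF L(1) L1])
      moreover have "\<bar>L * JJ L (k+1)\<bar> \<le> 3 * L ^ nat \<bar>k\<bar>" using LJJ_shift[OF L(1) L1, of k] L by (simp add: abs_mult)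
      moreover have "0 \<le> L ^ nat \<bar>k\<bar>" using L by simp
      ultimately show ?thesis unfolding gg_def by auto
    qed
    have "norm (rr L i j k) = \<bar>xsol L i k\<bar> * \<bar>gg L j k\<bar>" unfolding rr_def norm_of_real by (simp add: abs_mult)
    also have "\<dots> \<le> (Dx * L ^ nat \<bar>k\<bar>) * (6 * L ^ nat \<bar>k\<bar>)"
      by (rule mult_mono[OF xsol_decay[OF L] ggb]) (use L Dx_nonneg in auto)
    also have "\<dots> = 6 * Dx * (L ^ nat \<bar>k\<bar> * L ^ nat \<bar>k\<bar>)" by (simp add: mult_ac)
    also have "\<dots> = 6 * Dx * L ^ (2 * nat \<bar>k\<bar>)" by (simp only: pow_sq)
    also have "\<dots> \<le> 6 * Dx * (16 * L^4 * om k)"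
      by (intro mult_left_mono pow_tail4[OF L(1) L2 notK[OF False]]) (use Dx_nonneg in auto)
    finally show ?thesis using False unfolding g_def by (simp add: mult_ac)
  qed
  have "(\<Sum>\<^sub>\<infinity>k\<in>-Kset. norm (rr L i j k)) = (\<Sum>\<^sub>\<infinity>k\<in>-Kset. g k)"
    by (rule infsum_cong) (simp add: g_def)
  also have "\<dots> \<le> \<bar>\<dots>\<bar>" by simp
  also have "\<dots> \<le> (96 * Dx * L^4) * Wom" by (rule infsum_by_om[OF gb])
  finally show ?thesis .
qed

end


lemma On_dom: "On n g \<Longrightarrow> \<forall>\<^sub>F L in at_right 0. \<bar>f L\<bar> \<le> g L \<Longrightarrow> On n f"
  unfolding On_def
proof (elim exE)
  fix C assume "\<forall>\<^sub>F L in at_right 0. \<bar>g L\<bar> \<le> C * L ^ n" "\<forall>\<^sub>F L in at_right 0. \<bar>f L\<bar> \<le> g L"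
  then have "\<forall>\<^sub>F L in at_right 0. \<bar>f L\<bar> \<le> C * L ^ n" by eventually_elim auto
  then show "\<exists>C. \<forall>\<^sub>F L in at_right 0. \<bar>f L\<bar> \<le> C * L ^ n" by blast
qed

lemma On_abs: "On n f \<Longrightarrow> On n (\<lambda>L. \<bar>f L\<bar>)"
  unfolding On_def by simp

lemma On_sum: "finite A \<Longrightarrow> (\<And>i. i \<in> A \<Longrightarrow> On n (f i)) \<Longrightarrow> On n (\<lambda>L. \<Sum>i\<in>A. f i L)"
proof (induction A rule: finite_induct)
  case empty then show ?case unfolding On_def by (intro exI[of _ 0]) simp
next
  case (insert x F)
  then show ?case using On_add[of n "f x" "\<lambda>L. \<Sum>i\<in>F. f i L"] by simp
qed

lemma On_final:
  assumes "On 4 f"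
  shows "\<exists>C \<delta>. \<delta> > 0 \<and> (\<forall>L. 0 < L \<and> L < \<delta> \<longrightarrow> \<bar>f L\<bar> \<le> C * L^4)"
proof -
  obtain C where "\<forall>\<^sub>F L in at_right 0. \<bar>f L\<bar> \<le> C * L^4" using assms unfolding On_def by blast
  then obtain b where "b > 0" "\<And>L. 0 < L \<Longrightarrow> L < b \<Longrightarrow> \<bar>f L\<bar> \<le> C * L^4"
    unfolding eventually_at_right_field by auto
  then show ?thesis by blast
qed

lemma sum4: "(\<Sum>d<4. c d * (L::real)^d) = c 0 + L * c 1 + L^2 * c 2 + L^3 * c 3"
  by (simp add: eval_nat_numeral lessThan_Suc algebra_simps)

context rhs
begin

definition pp :: "2 \<Rightarrow> 2 \<Rightarrow> int \<Rightarrow> real poly" where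
  "pp i j k = (SOME p. On 4 (\<lambda>L. xsol L i k * gg L j k - poly p L))"

lemma pp_prop: "k \<in> Kset \<Longrightarrow> On 4 (\<lambda>L. xsol L i k * gg L j k - poly (pp i j k) L)"
  unfolding pp_def using Pn_coef[of k i j] unfolding Pn_def by (rule someI_ex)

definition Yc :: "nat \<Rightarrow> complex \<Rightarrow> complex^2^2" where
  "Yc d z = (\<chi> i j. (if d = 0 \<and> i = j then 1 else 0) + (\<Sum>k\<in>Kset. complex_of_real (coeff (pp i j k) d) / (z - ah k)))"

lemma Yc_entry: "Yc d z $ i $ j = (if d = 0 \<and> i = j then 1 else 0) + (\<Sum>k\<in>Kset. complex_of_real (coeff (pp i j k) d) / (z - ah k))"
  unfolding Yc_def by simp

lemma Yc_mero: "(\<lambda>z. Yc d z $ i $ j) meromorphic_on UNIV"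
  unfolding Yc_entry by (intro meromorphic_intros)

lemma Yc_holo: "(\<lambda>z. Yc d z $ i $ j) holomorphic_on (- halfintC)"
  unfolding Yc_entry
proof (intro holomorphic_intros)
  fix z k assume "z \<in> - halfintC"
  then show "z - ah k \<noteq> 0" using halfintC_iff by auto
qed

definition Tp :: "2 \<Rightarrow> 2 \<Rightarrow> int \<Rightarrow> real \<Rightarrow> real" where
  "Tp i j k L = (\<Sum>d<4. coeff (pp i j k) d * L^d)"

lemma entry_diff:
  "(Ysol L z - (Yc 0 z + L *\<^sub>R Yc 1 z + L^2 *\<^sub>R Yc 2 z + L^3 *\<^sub>R Yc 3 z)) $ i $ j
     = Fs (rr L i j) UNIV z - (\<Sum>k\<in>Kset. complex_of_real (Tp i j k L) / (z - ah k))"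
proof -
  have "(\<Sum>k\<in>Kset. complex_of_real (Tp i j k L) / (z - ah k))
     = (\<Sum>k\<in>Kset. complex_of_real (coeff (pp i j k) 0) / (z - ah k))
       + complex_of_real L * (\<Sum>k\<in>Kset. complex_of_real (coeff (pp i j k) 1) / (z - ah k))
       + complex_of_real (L^2) * (\<Sum>k\<in>Kset. complex_of_real (coeff (pp i j k) 2) / (z - ah k))
       + complex_of_real (L^3) * (\<Sum>k\<in>Kset. complex_of_real (coeff (pp i j k) 3) / (z - ah k))"
    unfolding Tp_def sum4 by (simp add: sum.distrib sum_distrib_left add_divide_distrib mult.assoc)
  note S = this
  have A: "(Ysol L z - (Yc 0 z + L *\<^sub>R Yc 1 z + L^2 *\<^sub>R Yc 2 z + L^3 *\<^sub>R Yc 3 z)) $ i $ j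
     = Ysol L z $ i $ j - (Yc 0 z $ i $ j + L *\<^sub>R (Yc 1 z $ i $ j) + L^2 *\<^sub>R (Yc 2 z $ i $ j) + L^3 *\<^sub>R (Yc 3 z $ i $ j))"
    by simp
  show ?thesis unfolding A by (simp add: Ysol_entry Yc_entry scaleR_conv_of_real S)
qed

lemma expansion:
  assumes z: "z \<notin> halfintC"
  shows "\<exists>C \<delta>. \<delta> > 0 \<and> (\<forall>L. 0 < L \<and> L < \<delta> \<longrightarrow>
           norm (Ysol L z - (Yc 0 z + L *\<^sub>R Yc 1 z + L^2 *\<^sub>R Yc 2 z + L^3 *\<^sub>R Yc 3 z)) \<le> C * L^4)"
proof -
  obtain e where e: "0 < e" "\<And>k. e \<le> cmod (z - ah k)" using sep_point[OF z] by blast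
  define E where "E L i j = (Ysol L z - (Yc 0 z + L *\<^sub>R Yc 1 z + L^2 *\<^sub>R Yc 2 z + L^3 *\<^sub>R Yc 3 z)) $ i $ j" for L i j
  have Ebound: "cmod (E L i j) \<le> (\<Sum>k\<in>Kset. \<bar>xsol L i k * gg L j k - Tp i j k L\<bar> / e) + ((96 * Dx * L^4) * Wom) / e"
    if L: "0 < L" "L \<le> L0" for L i j
  proof -
    have L': "0 \<le> L" "L \<le> L0" using L by auto
    have dec: "Fs (rr L i j) UNIV z - (\<Sum>k\<in>Kset. rr L i j k / (z - ah k)) = Fs (rr L i j) (UNIV - Kset) z"
      by (rule Fs_diff_finite[OF rr_summable[OF L'] e(1)]) (use e Kset_finite in auto)
    have "E L i j = (\<Sum>k\<in>Kset. (rr L i j k - complex_of_real (Tp i j k L)) / (z - ah k)) + Fs (rr L i j) (UNIV - Kset) z"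
      unfolding E_def entry_diff dec[symmetric] by (simp add: sum_subtractf diff_divide_distrib)
    then have "cmod (E L i j) \<le> cmod (\<Sum>k\<in>Kset. (rr L i j k - complex_of_real (Tp i j k L)) / (z - ah k)) + cmod (Fs (rr L i j) (UNIV - Kset) z)"
      by (simp add: norm_triangle_ineq)
    also have "cmod (\<Sum>k\<in>Kset. (rr L i j k - complex_of_real (Tp i j k L)) / (z - ah k)) \<le> (\<Sum>k\<in>Kset. \<bar>xsol L i k * gg L j k - Tp i j k L\<bar> / e)"
    proof -
      have "cmod (\<Sum>k\<in>Kset. (rr L i j k - complex_of_real (Tp i j k L)) / (z - ah k)) \<le> (\<Sum>k\<in>Kset. cmod ((rr L i j k - complex_of_real (Tp i j k L)) / (z - ah k)))"
        by (rule norm_sum)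
      also have "\<dots> \<le> (\<Sum>k\<in>Kset. \<bar>xsol L i k * gg L j k - Tp i j k L\<bar> / e)"
      proof (rule sum_mono)
        fix k
        have "cmod ((rr L i j k - complex_of_real (Tp i j k L)) / (z - ah k)) = \<bar>xsol L i k * gg L j k - Tp i j k L\<bar> / cmod (z - ah k)"
        proof -
          have "rr L i j k - complex_of_real (Tp i j k L) = complex_of_real (xsol L i k * gg L j k - Tp i j k L)"
            unfolding rr_def by simp
          then show ?thesis by (simp only: norm_divide norm_of_real)
        qed
        also have "\<dots> \<le> \<bar>xsol L i k * gg L j k - Tp i j k L\<bar> / e"
          using e by (intro divide_left_mono) (auto intro: mult_pos_pos order.strict_trans2[OF e(1) e(2)])
        finally show "cmod ((rr L i j k - complex_of_real (Tp i j k L)) / (z - ah k)) \<le> \<bar>xsol L i k * gg L j k - Tp i j k L\<bar> / e" .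
      qed
      finally show ?thesis .
    qed
    also have "cmod (Fs (rr L i j) (UNIV - Kset) z) \<le> ((96 * Dx * L^4) * Wom) / e"
    proof -
      have "cmod (Fs (rr L i j) (UNIV - Kset) z) \<le> (\<Sum>\<^sub>\<infinity>k\<in>UNIV - Kset. norm (rr L i j k)) / e"
        by (rule Fs_tail_bound[OF rr_summable[OF L'] e(1)]) (use e in auto)
      also have "\<dots> \<le> ((96 * Dx * L^4) * Wom) / e"
        using Ytail[OF L'] e(1) by (intro divide_right_mono) (auto simp: Compl_eq_Diff_UNIV)
      finally show ?thesis .
    qed
    finally show ?thesis by simp
  qed
  have Oterm: "On 4 (\<lambda>L. \<bar>xsol L i k * gg L j k - Tp i j k L\<bar> / e)" if k: "k \<in> Kset" for i j k
  proof -
    have "On 4 (\<lambda>L. (xsol L i k * gg L j k - poly (pp i j k) L) + (poly (pp i j k) L - Tp i j k L))"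
      unfolding Tp_def by (intro On_add pp_prop[OF k] poly_trunc4)
    then have "On 4 (\<lambda>L. (1/e) * \<bar>xsol L i k * gg L j k - Tp i j k L\<bar>)" by (intro On_cmult On_abs) simp
    then show ?thesis by simp
  qed
  have OE: "On 4 (\<lambda>L. cmod (E L i j))" for i j
  proof (rule On_dom)
    show "On 4 (\<lambda>L. (\<Sum>k\<in>Kset. \<bar>xsol L i k * gg L j k - Tp i j k L\<bar> / e) + ((96 * Dx * Wom) / e) * L^4)"
    proof (intro On_add On_sum Kset_finite Oterm)
      have "On 4 (\<lambda>L. L ^ 4)" unfolding On_def
        by (rule exI[of _ 1], rule eventually_mono[OF ev01]) auto
      then show "On 4 (\<lambda>L. 96 * Dx * Wom / e * L ^ 4)" by (rule On_cmult)
    qed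
    show "\<forall>\<^sub>F L in at_right 0. \<bar>cmod (E L i j)\<bar> \<le> (\<Sum>k\<in>Kset. \<bar>xsol L i k * gg L j k - Tp i j k L\<bar> / e) + ((96 * Dx * Wom) / e) * L^4"
      using ev_L0[OF L0_pos] by (rule eventually_mono) (use Ebound in \<open>auto simp: mult_ac\<close>)
  qed
  have "On 4 (\<lambda>L. norm (Ysol L z - (Yc 0 z + L *\<^sub>R Yc 1 z + L^2 *\<^sub>R Yc 2 z + L^3 *\<^sub>R Yc 3 z)))"
  proof (rule On_dom)
    show "On 4 (\<lambda>L. \<Sum>i\<in>UNIV. \<Sum>j\<in>UNIV. cmod (E L i j))" by (intro On_sum finite OE)
    show "\<forall>\<^sub>F L in at_right 0. \<bar>norm (Ysol L z - (Yc 0 z + L *\<^sub>R Yc 1 z + L^2 *\<^sub>R Yc 2 z + L^3 *\<^sub>R Yc 3 z))\<bar> \<le> (\<Sum>i\<in>UNIV. \<Sum>j\<in>UNIV. cmod (E L i j))"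
      unfolding E_def abs_norm_cancel by (intro always_eventually allI norm_le_sum_mat)
  qed
  from On_final[OF this] show ?thesis by simp
qed

end


lemma summable_finite_big:
  fixes f :: "real \<Rightarrow> real"
  assumes sm: "f summable_on A" and nn: "\<And>x. x \<in> A \<Longrightarrow> 0 \<le> f x" and c: "0 < c"
  shows "finite {x\<in>A. c < f x}"
proof (rule ccontr)
  assume inf: "infinite {x\<in>A. c < f x}"
  obtain n :: nat where n: "infsum f A / c < real n" using reals_Archimedean2 by blast
  then have n': "infsum f A < real n * c" using c by (simp add: field_simps)
  obtain F where F: "finite F" "card F = n" "F \<subseteq> {x\<in>A. c < f x}"
    using infinite_arbitrarily_large[OF inf] by blast
  have "of_nat (card F) * c \<le> sum f F" by (rule sum_bounded_below) (use F in auto)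
  moreover have "sum f F \<le> infsum f A"
    by (rule finite_sum_le_infsum[OF sm F(1)]) (use F nn in auto)
  ultimately show False using n' F(2) by simp
qed

theorem corollary5p2:
  fixes \<sigma> :: "real \<Rightarrow> real" and s Q :: real
  assumes sigma_range: "\<forall>l\<in>halfint. 0 \<le> \<sigma> l \<and> \<sigma> l \<le> 1"
    and sigma_sum: "\<sigma> summable_on {l \<in> halfint. l < 0}"
    and s_half: "s \<in> halfint"
    and Q_lim: "(\<lambda>N. \<Prod>i\<in>{1..N}. 1 - \<sigma> (- real i - s)) \<longlonglongrightarrow> Q"
    and Q_pos: "Q > 0"
  shows "\<exists>Lstar>0. \<exists>(Y :: real \<Rightarrow> complex \<Rightarrow> complex^2^2) Y0 Y1 Y2 Y3.
           (\<forall>L\<in>{0..Lstar}. RH_solution \<sigma> s L (Y L)) \<and>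
           (\<forall>Yi\<in>{Y0, Y1, Y2, Y3}. \<forall>i j. (\<lambda>z. Yi z $ i $ j) meromorphic_on UNIV \<and>
                                         (\<lambda>z. Yi z $ i $ j) holomorphic_on (- halfintC)) \<and>
           (\<forall>z. z \<notin> halfintC \<longrightarrow>
              (\<exists>C \<delta>. \<delta> > 0 \<and> (\<forall>L. 0 < L \<and> L < \<delta> \<longrightarrow>
                 norm (Y L z - (Y0 z + L *\<^sub>R Y1 z + L^2 *\<^sub>R Y2 z + L^3 *\<^sub>R Y3 z)) \<le> C * L^4)))"
proof -
  define sg where "sg m = \<sigma> (of_int m + 1/2 - s - 1/2)" for m :: int
  obtain n0 :: int where n0: "s = of_int n0 + 1/2" using s_half unfolding halfint_def by blast
  have hs: "of_int m + 1/2 - s - 1/2 \<in> halfint" for m :: int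
  proof -
    have "of_int m + 1/2 - s - 1/2 = of_int (m - n0 - 1) + (1/2::real)" using n0 by simp
    then show ?thesis unfolding halfint_def by blast
  qed
  have sg01: "0 \<le> sg m \<and> sg m \<le> 1" for m using sigma_range hs[of m] unfolding sg_def by blast
  have lt1: "sg m < 1" if m: "m < 0" for m
  proof (rule ccontr)
    assume "\<not> sg m < 1"
    then have s1: "sg m = 1" using sg01[of m] by simp
    define i where "i = nat (-m)"
    have i1: "1 \<le> i" using m unfolding i_def by simp
    have ei: "- real i - s = of_int m + 1/2 - s - 1/2" using m unfolding i_def by simp
    have "\<forall>\<^sub>F N in sequentially. (\<Prod>i\<in>{1..N}. 1 - \<sigma> (- real i - s)) = 0"
      unfolding eventually_sequentially
    proof (intro exI allI impI)
      fix N assume "i \<le> N"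
      then have "i \<in> {1..N}" using i1 by simp
      moreover have "1 - \<sigma> (- real i - s) = 0" using s1 ei unfolding sg_def by simp
      ultimately show "(\<Prod>i\<in>{1..N}. 1 - \<sigma> (- real i - s)) = 0"
        by (intro prod_zero) auto
    qed
    then have "(\<lambda>N. \<Prod>i\<in>{1..N}. 1 - \<sigma> (- real i - s)) \<longlonglongrightarrow> 0" by (rule tendsto_eventually)
    then have "Q = 0" using Q_lim LIMSEQ_unique by blast
    then show False using Q_pos by simp
  qed
  define B where "B = {l \<in> {l \<in> halfint. l < 0}. 1/2 < \<sigma> l}"
  have finB: "finite B" unfolding B_def
    by (rule summable_finite_big[OF sigma_sum]) (use sigma_range in auto)
  define E where "E = {m::int. m < 0 \<and> 1/2 < sg m}"
  define g where "g m = of_int m + 1/2 - s - 1/2" for m :: int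
  have injg: "inj g" unfolding g_def inj_on_def by simp
  have "E \<subseteq> g -` B \<union> {\<lceil>s\<rceil>..0}"
  proof
    fix m assume mE: "m \<in> E"
    show "m \<in> g -` B \<union> {\<lceil>s\<rceil>..0}"
    proof (cases "g m < 0")
      case True
      then have "g m \<in> B" using mE hs[of m] unfolding B_def E_def sg_def g_def by auto
      then show ?thesis by simp
    next
      case False
      then have "s \<le> of_int m" unfolding g_def by simp
      then have "\<lceil>s\<rceil> \<le> m" by (simp add: ceiling_le_iff)
      then show ?thesis using mE unfolding E_def by simp
    qed
  qed
  moreover have "finite (g -` B \<union> {\<lceil>s\<rceil>..0})" using finite_vimageI[OF finB injg] by simp
  ultimately have finE: "finite E" by (rule finite_subset)
  define \<theta> where "\<theta> = Max (insert (1/2) (sg ` E))"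
  have finS: "finite (insert (1/2) (sg ` E))" using finE by simp
  have th1: "\<theta> < 1" unfolding \<theta>_def
    using finS by (subst Max_less_iff) (auto simp: E_def intro: lt1)
  have thh: "1/2 \<le> \<theta>" unfolding \<theta>_def using finS by (intro Max_ge) auto
  have thn: "sg m \<le> \<theta>" if "m < 0" for m
  proof (cases "m \<in> E")
    case True then show ?thesis unfolding \<theta>_def using finS by (intro Max_ge) auto
  next
    case False then have "sg m \<le> 1/2" using that unfolding E_def by auto
    then show ?thesis using thh by linarith
  qed
  interpret R: rhs \<sigma> s \<theta>
  proof
    show "0 \<le> \<sigma> (of_int m + 1/2 - s - 1/2) \<and> \<sigma> (of_int m + 1/2 - s - 1/2) \<le> 1" for m :: int
      using sg01[of m] unfolding sg_def .
    show "\<sigma> (of_int m + 1/2 - s - 1/2) \<le> \<theta>" if "m < 0" for m :: int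
      using thn[OF that] unfolding sg_def .
    show "0 \<le> \<theta>" using thh by linarith
    show "\<theta> < 1" by (rule th1)
  qed
  have c1: "\<forall>L\<in>{0..R.L0}. RH_solution \<sigma> s L (R.Ysol L)"
    using R.RH_ok by auto
  have c2: "\<forall>Yi\<in>{R.Yc 0, R.Yc 1, R.Yc 2, R.Yc 3}. \<forall>i j. (\<lambda>z. Yi z $ i $ j) meromorphic_on UNIV \<and>
                                         (\<lambda>z. Yi z $ i $ j) holomorphic_on (- halfintC)"
    using R.Yc_mero R.Yc_holo by auto
  have c3: "\<forall>z. z \<notin> halfintC \<longrightarrow>
              (\<exists>C \<delta>. \<delta> > 0 \<and> (\<forall>L. 0 < L \<and> L < \<delta> \<longrightarrow>
                 norm (R.Ysol L z - (R.Yc 0 z + L *\<^sub>R R.Yc 1 z + L^2 *\<^sub>R R.Yc 2 z + L^3 *\<^sub>R R.Yc 3 z)) \<le> C * L^4))"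
    using R.expansion by blast
  show ?thesis using R.L0_pos c1 c2 c3 by blast
qed


end
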